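(* Let $L\ge1$ and for $l=1,\ldots,L$ let $\mathcal{E}^{l}=\{\eta_{i}^{l},\rho_{i}^{l}\}_{i\in\mathbb{N}_{n_{l}}}$ be an ensemble on a finite-dimensional Hilbert space $\mathcal{H}_l$, and let $\mathcal{M}^{l}=\{M_{?}^{l}\}\cup\{M_{i}^{l}\}_{i\in\mathbb{N}_{n_{l}}}$ be a maximum-confidence measurement of $\mathcal{E}^{l}$. Let $\mathcal{M}=\{M_{?}\}\cup\{M_{\vec c}\}_{\vec c\in\mathbb{N}_{\vec n}}$ be a measurement on $\bigotimes_l\mathcal{H}_l$ such that $M_{\vec c}=M^{1}_{c_1}\otimes\cdots\otimes M^{L}_{c_L}$ for every $\vec c=(c_1,\ldots,c_L)\in\mathbb{N}_{\vec n}$. Then $\mathcal{M}$ is a maximum-confidence measurement of the quantum sequence ensemble $\mathcal{E}=\bigotimes_{l=1}^{L}\mathcal{E}^{l}$.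
   Context: $\mathbb{N}_{n}=\{1,\ldots,n\}$, $\mathbb{N}_{\vec n}=\mathbb{N}_{n_1}\times\cdots\times\mathbb{N}_{n_L}$. An ensemble $\mathcal{E}=\{\eta_{i},\rho_{i}\}_{i\in I}$ (finite index set $I$) on a finite-dimensional complex Hilbert space: density operators $\rho_i$ with probabilities $\eta_i>0$ summing to $1$; $\rho_0=\sum_i\eta_i\rho_i$. A measurement is $\{M_{?}\}\cup\{M_{i}\}_{i\in I}$, positive-semidefinite operators summing to the identity. $\mathcal{C}_{x}(\mathcal{E})$ is the maximum of $\eta_{x}\Tr(\rho_{x}M_{x})/\Tr(\rho_{0}M_{x})$ over measurements with $\Tr(\rho_{0}M_{x})>0$. A measurement is a maximum-confidence measurement of $\mathcal{E}$ if $\Tr[(\mathcal{C}_{i}(\mathcal{E})\rho_{0}-\eta_{i}\rho_{i})M_i]=0$ for all $i\in I$. The quantum sequence ensemble $\bigotimes_l\mathcal{E}^l$ is the ensemble on $\bigotimes_l\mathcal{H}_l$ indexed by $\mathbb{N}_{\vec n}$ with $\eta_{\vec c}=\prod_l\eta^l_{c_l}$, $\rho_{\vec c}=\bigotimes_l\rho^l_{c_l}$. *)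

theory Defs
  imports "Jordan_Normal_Form.Matrix"
begin

text \<open>Operators on the finite-dimensional Hilbert space C^n are complex n x n matrices.\<close>

definition mtrace :: "complex mat \<Rightarrow> complex" where
  "mtrace A = (\<Sum>i<dim_row A. A $$ (i, i))"

definition hermitian_mat :: "nat \<Rightarrow> complex mat \<Rightarrow> bool" where
  "hermitian_mat n A \<longleftrightarrow> A \<in> carrier_mat n n \<and>
     (\<forall>i<n. \<forall>j<n. A $$ (i, j) = cnj (A $$ (j, i)))"

definition psd :: "nat \<Rightarrow> complex mat \<Rightarrow> bool" where
  "psd n A \<longleftrightarrow> hermitian_mat n A \<and>
     (\<forall>v \<in> carrier_vec n. let q = (\<Sum>i<n. cnj (v $ i) * (A *\<^sub>v v) $ i) in Im q = 0 \<and> 0 \<le> Re q)"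

definition density_op :: "nat \<Rightarrow> complex mat \<Rightarrow> bool" where
  "density_op n \<rho> \<longleftrightarrow> psd n \<rho> \<and> mtrace \<rho> = 1"

definition ensemble :: "nat \<Rightarrow> 'i set \<Rightarrow> ('i \<Rightarrow> real) \<Rightarrow> ('i \<Rightarrow> complex mat) \<Rightarrow> bool" where
  "ensemble n I \<eta> \<rho> \<longleftrightarrow> finite I \<and> (\<forall>i\<in>I. 0 < \<eta> i \<and> density_op n (\<rho> i)) \<and> (\<Sum>i\<in>I. \<eta> i) = 1"

definition avg_state :: "nat \<Rightarrow> 'i set \<Rightarrow> ('i \<Rightarrow> real) \<Rightarrow> ('i \<Rightarrow> complex mat) \<Rightarrow> complex mat" where
  "avg_state n I \<eta> \<rho> = mat n n (\<lambda>(a, b). \<Sum>i\<in>I. complex_of_real (\<eta> i) * \<rho> i $$ (a, b))"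

definition measurement :: "nat \<Rightarrow> 'i set \<Rightarrow> complex mat \<Rightarrow> ('i \<Rightarrow> complex mat) \<Rightarrow> bool" where
  "measurement n I Mq M \<longleftrightarrow> psd n Mq \<and> (\<forall>i\<in>I. psd n (M i)) \<and>
     (\<forall>a<n. \<forall>b<n. Mq $$ (a, b) + (\<Sum>i\<in>I. M i $$ (a, b)) = (1\<^sub>m n :: complex mat) $$ (a, b))"

text \<open>The maximum confidence C_x(E) (supremum, which is attained, of the confidence ratio).\<close>
definition max_conf_value :: "nat \<Rightarrow> 'i set \<Rightarrow> ('i \<Rightarrow> real) \<Rightarrow> ('i \<Rightarrow> complex mat) \<Rightarrow> 'i \<Rightarrow> real" where
  "max_conf_value n I \<eta> \<rho> x = Sup
     {\<eta> x * Re (mtrace (\<rho> x * M x)) / Re (mtrace (avg_state n I \<eta> \<rho> * M x)) | Mq M.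
        measurement n I Mq M \<and> 0 < Re (mtrace (avg_state n I \<eta> \<rho> * M x))}"

definition max_conf_measurement ::
  "nat \<Rightarrow> 'i set \<Rightarrow> ('i \<Rightarrow> real) \<Rightarrow> ('i \<Rightarrow> complex mat) \<Rightarrow> complex mat \<Rightarrow> ('i \<Rightarrow> complex mat) \<Rightarrow> bool" where
  "max_conf_measurement n I \<eta> \<rho> Mq M \<longleftrightarrow> measurement n I Mq M \<and>
     (\<forall>i\<in>I. mtrace ((complex_of_real (max_conf_value n I \<eta> \<rho> i) \<cdot>\<^sub>m avg_state n I \<eta> \<rho>
                      - complex_of_real (\<eta> i) \<cdot>\<^sub>m \<rho> i) * M i) = 0)"

definition kron_mat :: "complex mat \<Rightarrow> complex mat \<Rightarrow> complex mat" where
  "kron_mat A B = mat (dim_row A * dim_row B) (dim_col A * dim_col B)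
     (\<lambda>(i, j). A $$ (i div dim_row B, j div dim_col B) * B $$ (i mod dim_row B, j mod dim_col B))"

fun tensor_list :: "complex mat list \<Rightarrow> complex mat" where
  "tensor_list [] = 1\<^sub>m 1"
| "tensor_list (A # As) = kron_mat A (tensor_list As)"

definition seq_index :: "nat \<Rightarrow> (nat \<Rightarrow> nat) \<Rightarrow> nat list set" where
  "seq_index L n = {c. length c = L \<and> (\<forall>l<L. c ! l \<in> {1..n l})}"

definition seq_eta :: "nat \<Rightarrow> (nat \<Rightarrow> nat \<Rightarrow> real) \<Rightarrow> nat list \<Rightarrow> real" where
  "seq_eta L \<eta> c = (\<Prod>l<L. \<eta> l (c ! l))"

definition seq_rho :: "nat \<Rightarrow> (nat \<Rightarrow> nat \<Rightarrow> complex mat) \<Rightarrow> nat list \<Rightarrow> complex mat" where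
  "seq_rho L \<rho> c = tensor_list (map (\<lambda>l. \<rho> l (c ! l)) [0..<L])"

end

theory Submission
  imports Defs
begin

definition hermF :: "nat \<Rightarrow> (nat \<Rightarrow> nat \<Rightarrow> complex) \<Rightarrow> bool" where
  "hermF n F \<longleftrightarrow> (\<forall>i<n. \<forall>j<n. F i j = cnj (F j i))"
definition qF :: "nat \<Rightarrow> (nat \<Rightarrow> nat \<Rightarrow> complex) \<Rightarrow> (nat \<Rightarrow> complex) \<Rightarrow> complex" where
  "qF n F f = (\<Sum>i<n. \<Sum>j<n. cnj (f i) * F i j * f j)"
definition posF :: "nat \<Rightarrow> (nat \<Rightarrow> nat \<Rightarrow> complex) \<Rightarrow> bool" where
  "posF n F \<longleftrightarrow> (\<forall>f. Im (qF n F f) = 0 \<and> 0 \<le> Re (qF n F f))"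

lemma sum_delta_lt: "k < (n::nat) \<Longrightarrow> (\<Sum>i<n. if i = k then (X i :: 'a::comm_monoid_add) else 0) = X k"
  by (subst sum.delta) auto
lemma sum_if_out: "(\<Sum>j\<in>A. if P then (g j :: 'a::comm_monoid_add) else 0) = (if P then (\<Sum>j\<in>A. g j) else 0)"
  by (cases P) auto

lemma qF_add_delta:
  assumes "k < n"
  shows "qF n F (\<lambda>i. f i + (if i = k then b else 0)) = qF n F f + cnj b * (\<Sum>j<n. F k j * f j)
     + b * (\<Sum>i<n. cnj (f i) * F i k) + cnj b * b * F k k"
proof -
  have e: "cnj (f i + (if i = k then b else 0)) * F i j * (f j + (if j = k then b else 0)) =
     cnj (f i) * F i j * f j + (if i = k then cnj b * F k j * f j else 0)
     + (if j = k then cnj (f i) * F i k * b else 0) + (if i = k then (if j = k then cnj b * b * F k k else 0) else 0)" for i j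
    by (auto simp: algebra_simps)
  have 1: "(\<Sum>i<n. \<Sum>j<n. (if i = k then cnj b * F k j * f j else 0)) = cnj b * (\<Sum>j<n. F k j * f j)"
    using assms by (simp add: sum_if_out sum_delta_lt sum_distrib_left algebra_simps)
  have 2: "(\<Sum>i<n. \<Sum>j<n. (if j = k then cnj (f i) * F i k * b else 0)) = b * (\<Sum>i<n. cnj (f i) * F i k)"
    using assms by (simp add: sum_if_out sum_delta_lt sum_distrib_left algebra_simps)
  have 3: "(\<Sum>i<n. \<Sum>j<n. (if i = k then (if j = k then cnj b * b * F k k else 0) else 0)) = cnj b * b * F k k"
    using assms by (simp add: sum_if_out sum_delta_lt)
  show ?thesis
    unfolding qF_def e sum.distrib 1 2 3 by simp
qed

lemma qF_zero[simp]: "qF n F (\<lambda>_. 0) = 0"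
  by (simp add: qF_def)

lemma qF_delta: "k < n \<Longrightarrow> qF n F (\<lambda>i. if i = k then b else 0) = cnj b * b * F k k"
  using qF_add_delta[of k n F "\<lambda>_. 0" b] by simp

lemma gram_aux:
  "hermF n F \<Longrightarrow> posF n F \<Longrightarrow> (\<forall>i<n. \<forall>j<n. (i < k \<or> j < k) \<longrightarrow> F i j = 0) \<Longrightarrow>
   \<exists>(m::nat) w. \<forall>i<n. \<forall>j<n. F i j = (\<Sum>l<m. w l i * cnj (w l j))"
proof (induction "n - k" arbitrary: k F)
  case 0
  then have "\<forall>i<n. \<forall>j<n. F i j = 0" by auto
  then show ?case by (intro exI[where x="0::nat"]) simp
next
  case (Suc t)
  note herm = Suc.prems(1) and pos = Suc.prems(2) and z = Suc.prems(3)
  have kn: "k < n" using Suc.hyps(2) by simp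
  define a where "a = F k k"
  have ima: "Im a = 0"
  proof -
    have "F k k = cnj (F k k)" using herm kn unfolding hermF_def by blast
    then show ?thesis unfolding a_def by (metis cnj.simps(2) neg_equal_zero)
  qed
  have rea: "0 \<le> Re a"
    using pos qF_delta[OF kn, of F 1] unfolding posF_def a_def by (metis mult_1 complex_cnj_one)
  show ?case
  proof (cases "Re a = 0")
    case True
    then have a0: "F k k = 0" using ima unfolding a_def by (simp add: complex_eq_iff)
    have row0: "F k j = 0" if jn: "j < n" for j
    proof (rule ccontr)
      assume b0: "F k j \<noteq> 0"
      then have jk: "j \<noteq> k" using a0 by auto
      define b where "b = F k j"
      define c where "c = Re (F j j)"
      have c0: "0 \<le> c" using pos qF_delta[OF jn, of F 1] unfolding posF_def c_def
        by (metis mult_1 complex_cnj_one)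
      define s where "s = - complex_of_real (c + 1) * b / (cnj b * b)"
      have bb: "cnj b * b \<noteq> 0" using b0 unfolding b_def by simp
      have s1: "cnj s * b = - complex_of_real (c + 1)"
        unfolding s_def using bb by (simp add: field_simps)
      have s2: "s * cnj b = - complex_of_real (c + 1)"
        unfolding s_def using bb by (simp add: field_simps)
      have fj: "(\<Sum>j'<n. F k j' * (if j' = j then 1 else 0)) = b"
      proof -
        have "(\<Sum>j'<n. F k j' * (if j' = j then 1 else 0)) = (\<Sum>j'<n. if j' = j then F k j' else 0)"
          by (intro sum.cong) auto
        then show ?thesis using sum_delta_lt[OF jn, of "\<lambda>j'. F k j'"] unfolding b_def by simp
      qed
      have fi: "(\<Sum>i<n. cnj (if i = j then 1 else 0) * F i k) = cnj b"
      proof -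
        have "(\<Sum>i<n. cnj (if i = j then 1 else 0) * F i k) = (\<Sum>i<n. if i = j then F i k else 0)"
          by (intro sum.cong) auto
        also have "\<dots> = F j k" by (rule sum_delta_lt[OF jn])
        also have "\<dots> = cnj b" using herm jn kn unfolding hermF_def b_def by blast
        finally show ?thesis .
      qed
      have "qF n F (\<lambda>i. (if i = j then 1 else 0) + (if i = k then s else 0)) =
          F j j + cnj s * b + s * cnj b"
        using qF_add_delta[OF kn, of F "\<lambda>i. if i = j then 1 else 0" s] fj fi a0 qF_delta[OF jn, of F 1]
        by simp
      also have "\<dots> = F j j - 2 * complex_of_real (c + 1)" using s1 s2 by simp
      finally have "Re (qF n F (\<lambda>i. (if i = j then 1 else 0) + (if i = k then s else 0))) = c - 2 * (c + 1)"
        unfolding c_def by simp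
      moreover have "0 \<le> Re (qF n F (\<lambda>i. (if i = j then 1 else 0) + (if i = k then s else 0)))"
        using pos unfolding posF_def by blast
      ultimately show False using c0 by simp
    qed
    have z': "\<forall>i<n. \<forall>j<n. (i < Suc k \<or> j < Suc k) \<longrightarrow> F i j = 0"
    proof (intro allI impI)
      fix i j assume ij: "i < n" "j < n" "i < Suc k \<or> j < Suc k"
      show "F i j = 0"
      proof (cases "i < k \<or> j < k")
        case True then show ?thesis using z ij by blast
      next
        case False
        then have "i = k \<or> j = k" using ij by auto
        then show ?thesis
        proof
          assume "i = k" then show ?thesis using row0 ij by simp
        next
          assume "j = k"
          then have "F i j = cnj (F k i)" using herm ij unfolding hermF_def by blast
          then show ?thesis using row0 ij by simp
        qed
      qed
    qed
    show ?thesis using Suc.hyps(1)[of "Suc k" F] Suc.hyps(2) herm pos z' by simp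
  next
    case False
    then have apos: "0 < Re a" using rea by simp
    define r where "r = sqrt (Re a)"
    have rr: "complex_of_real r * complex_of_real r = a"
      using apos ima unfolding r_def by (simp add: complex_eq_iff flip: of_real_mult)
    have r0: "complex_of_real r \<noteq> 0" using apos unfolding r_def by simp
    have a0: "a \<noteq> 0" using apos by auto
    have cnja: "cnj a = a" using ima by (simp add: complex_eq_iff)
    define w where "w i = F i k / complex_of_real r" for i
    define F' where "F' i j = F i j - w i * cnj (w j)" for i j
    have herm': "hermF n F'"
      unfolding hermF_def
    proof (intro allI impI)
      fix i j assume "i < n" "j < n"
      then have "F i j = cnj (F j i)" using herm unfolding hermF_def by blast
      then show "F' i j = cnj (F' j i)" unfolding F'_def by simp
    qed
    have z': "\<forall>i<n. \<forall>j<n. (i < Suc k \<or> j < Suc k) \<longrightarrow> F' i j = 0"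
    proof (intro allI impI)
      fix i j assume ij: "i < n" "j < n" "i < Suc k \<or> j < Suc k"
      show "F' i j = 0"
      proof (cases "i < k \<or> j < k")
        case True
        then show ?thesis
        proof
          assume ik: "i < k"
          then have "F i j = 0" "F i k = 0" using z ij kn by auto
          then show ?thesis unfolding F'_def w_def by simp
        next
          assume jk: "j < k"
          then have "F i j = 0" "F j k = 0" using z ij kn by auto
          then show ?thesis unfolding F'_def w_def by simp
        qed
      next
        case False
        then have "i = k \<or> j = k" using ij by auto
        then show ?thesis
        proof
          assume ik: "i = k"
          have "F j k = cnj (F k j)" using herm ij kn unfolding hermF_def by blast
          then have "w k * cnj (w j) = a * F k j / (complex_of_real r * complex_of_real r)"
            unfolding w_def a_def by simp
          also have "\<dots> = F k j" using rr a0 by simp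
          finally show ?thesis unfolding F'_def ik by simp
        next
          assume jk: "j = k"
          have "w i * cnj (w k) = F i k * cnj a / (complex_of_real r * complex_of_real r)"
            unfolding w_def a_def by simp
          also have "\<dots> = F i k" using rr a0 cnja by simp
          finally show ?thesis unfolding F'_def jk by simp
        qed
      qed
    qed
    have pos': "posF n F'"
      unfolding posF_def
    proof
      fix f :: "nat \<Rightarrow> complex"
      define s where "s = (\<Sum>j<n. F k j * f j)"
      define \<beta> where "\<beta> = - s / a"
      have cs: "(\<Sum>i<n. cnj (f i) * F i k) = cnj s"
      proof -
        have "(\<Sum>i<n. cnj (f i) * F i k) = (\<Sum>i<n. cnj (f i) * cnj (F k i))"
        proof (intro sum.cong refl)
          fix i assume "i \<in> {..<n}"
          then have "F i k = cnj (F k i)" using herm kn unfolding hermF_def by blast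
          then show "cnj (f i) * F i k = cnj (f i) * cnj (F k i)" by simp
        qed
        then show ?thesis unfolding s_def by (simp add: mult.commute)
      qed
      have q1: "qF n F (\<lambda>i. f i + (if i = k then \<beta> else 0)) = qF n F f - cnj s * s / a"
        unfolding qF_add_delta[OF kn] cs s_def[symmetric]
        unfolding \<beta>_def a_def[symmetric] using a0 cnja by (simp add: field_simps)
      have w1: "(\<Sum>j<n. cnj (w j) * f j) = s / complex_of_real r"
      proof -
        have "(\<Sum>j<n. cnj (w j) * f j) = (\<Sum>j<n. F k j * f j / complex_of_real r)"
        proof (intro sum.cong refl)
          fix j assume "j \<in> {..<n}"
          then have "F j k = cnj (F k j)" using herm kn unfolding hermF_def by blast
          then show "cnj (w j) * f j = F k j * f j / complex_of_real r" unfolding w_def by simp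
        qed
        then show ?thesis unfolding s_def by (simp add: sum_divide_distrib)
      qed
      have w2: "(\<Sum>i<n. cnj (f i) * w i) = cnj s / complex_of_real r"
        unfolding w_def cs[symmetric] by (simp add: sum_divide_distrib)
      have "qF n F' f = qF n F f - (\<Sum>i<n. \<Sum>j<n. (cnj (f i) * w i) * (cnj (w j) * f j))"
        unfolding qF_def F'_def by (simp add: algebra_simps sum_subtractf)
      also have "(\<Sum>i<n. \<Sum>j<n. (cnj (f i) * w i) * (cnj (w j) * f j)) =
          (\<Sum>i<n. cnj (f i) * w i) * (\<Sum>j<n. cnj (w j) * f j)"
        by (simp add: sum_product)
      also have "\<dots> = cnj s * s / a" unfolding w1 w2 rr[symmetric] by simp
      finally have "qF n F' f = qF n F (\<lambda>i. f i + (if i = k then \<beta> else 0))" using q1 by simp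
      then show "Im (qF n F' f) = 0 \<and> 0 \<le> Re (qF n F' f)" using pos unfolding posF_def by simp
    qed
    have tk: "t = n - Suc k" using Suc.hyps(2) by simp
    from Suc.hyps(1)[OF tk herm' pos' z'] obtain m :: nat and w' where
      w': "\<forall>i<n. \<forall>j<n. F' i j = (\<Sum>l<m. w' l i * cnj (w' l j))" by blast
    define W where "W l = (if l < m then w' l else w)" for l
    show ?thesis
    proof (intro exI[of _ "Suc m"] exI[of _ W] allI impI)
      fix i j assume ij: "i < n" "j < n"
      have "F i j = F' i j + w i * cnj (w j)" unfolding F'_def by simp
      also have "\<dots> = (\<Sum>l<m. W l i * cnj (W l j)) + W m i * cnj (W m j)"
        using w' ij unfolding W_def by simp
      also have "\<dots> = (\<Sum>l<Suc m. W l i * cnj (W l j))" by simp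
      finally show "F i j = (\<Sum>l<Suc m. W l i * cnj (W l j))" .
    qed
  qed
qed

lemma gram:
  "hermF n F \<Longrightarrow> posF n F \<Longrightarrow> \<exists>(m::nat) w. \<forall>i<n. \<forall>j<n. F i j = (\<Sum>l<m. w l i * cnj (w l j))"
  using gram_aux[of n F 0] by simp


abbreviation ent :: "complex mat \<Rightarrow> nat \<Rightarrow> nat \<Rightarrow> complex" where
  "ent A \<equiv> \<lambda>i j. A $$ (i, j)"

lemma hermitian_iff: "hermitian_mat n A \<longleftrightarrow> A \<in> carrier_mat n n \<and> hermF n (ent A)"
  unfolding hermitian_mat_def hermF_def by auto

lemma quad_vec:
  assumes A: "A \<in> carrier_mat n n" and v: "v \<in> carrier_vec n"
  shows "(\<Sum>i<n. cnj (v $ i) * (A *\<^sub>v v) $ i) = qF n (ent A) (\<lambda>i. v $ i)"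
proof -
  have "(A *\<^sub>v v) $ i = (\<Sum>j<n. A $$ (i, j) * v $ j)" if "i < n" for i
    using A v that by (simp add: scalar_prod_def atLeast0LessThan)
  then show ?thesis unfolding qF_def by (simp add: sum_distrib_left mult.assoc)
qed

lemma qF_cong: "(\<And>i. i < n \<Longrightarrow> f i = g i) \<Longrightarrow> qF n F f = qF n F g"
  unfolding qF_def by (intro sum.cong refl) auto

lemma psd_iff: "psd n A \<longleftrightarrow> A \<in> carrier_mat n n \<and> hermF n (ent A) \<and> posF n (ent A)"
proof
  assume p: "psd n A"
  then have A: "A \<in> carrier_mat n n" and h: "hermF n (ent A)"
    unfolding psd_def hermitian_iff by auto
  have "posF n (ent A)" unfolding posF_def
  proof
    fix f :: "nat \<Rightarrow> complex"
    have v: "vec n f \<in> carrier_vec n" by simp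
    have "qF n (ent A) f = qF n (ent A) (\<lambda>i. vec n f $ i)" by (rule qF_cong) simp
    also have "\<dots> = (\<Sum>i<n. cnj (vec n f $ i) * (A *\<^sub>v vec n f) $ i)" using quad_vec[OF A v] by simp
    finally show "Im (qF n (ent A) f) = 0 \<and> 0 \<le> Re (qF n (ent A) f)"
      using p v unfolding psd_def Let_def by metis
  qed
  then show "A \<in> carrier_mat n n \<and> hermF n (ent A) \<and> posF n (ent A)" using A h by simp
next
  assume "A \<in> carrier_mat n n \<and> hermF n (ent A) \<and> posF n (ent A)"
  then have A: "A \<in> carrier_mat n n" and h: "hermF n (ent A)" and p: "posF n (ent A)" by auto
  have "\<forall>v\<in>carrier_vec n. (let q = (\<Sum>i<n. cnj (v $ i) * (A *\<^sub>v v) $ i) in Im q = 0 \<and> 0 \<le> Re q)"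
  proof
    fix v :: "complex vec" assume v: "v \<in> carrier_vec n"
    show "let q = (\<Sum>i<n. cnj (v $ i) * (A *\<^sub>v v) $ i) in Im q = 0 \<and> 0 \<le> Re q"
      unfolding Let_def quad_vec[OF A v] using p unfolding posF_def by blast
  qed
  then show "psd n A" unfolding psd_def hermitian_iff using A h by blast
qed

lemma sum_swap3: "(\<Sum>i\<in>A. \<Sum>j\<in>B. \<Sum>k\<in>C. f i j k) = (\<Sum>k\<in>C. \<Sum>i\<in>A. \<Sum>j\<in>B. f i j k)"
proof -
  have "(\<Sum>i\<in>A. \<Sum>j\<in>B. \<Sum>k\<in>C. f i j k) = (\<Sum>i\<in>A. \<Sum>k\<in>C. \<Sum>j\<in>B. f i j k)"
    by (rule sum.cong[OF refl], rule sum.swap)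
  also have "\<dots> = (\<Sum>k\<in>C. \<Sum>i\<in>A. \<Sum>j\<in>B. f i j k)" by (rule sum.swap)
  finally show ?thesis .
qed

lemma posF_gram:
  assumes "finite K" and F: "\<And>i j. i < n \<Longrightarrow> j < n \<Longrightarrow> F i j = (\<Sum>k\<in>K. u k i * cnj (u k j))"
  shows "posF n F"
  unfolding posF_def
proof
  fix f :: "nat \<Rightarrow> complex"
  define \<sigma> where "\<sigma> k = (\<Sum>j<n. cnj (u k j) * f j)" for k
  have "qF n F f = (\<Sum>i<n. \<Sum>j<n. \<Sum>k\<in>K. (cnj (f i) * u k i) * (cnj (u k j) * f j))"
    unfolding qF_def using F by (simp add: sum_distrib_left sum_distrib_right mult.assoc mult.left_commute)
  also have "\<dots> = (\<Sum>k\<in>K. \<Sum>i<n. \<Sum>j<n. (cnj (f i) * u k i) * (cnj (u k j) * f j))"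
    by (rule sum_swap3)
  also have "\<dots> = (\<Sum>k\<in>K. (\<Sum>i<n. cnj (f i) * u k i) * (\<Sum>j<n. cnj (u k j) * f j))"
    by (simp only: sum_product)
  also have "\<dots> = (\<Sum>k\<in>K. cnj (\<sigma> k) * \<sigma> k)"
    unfolding \<sigma>_def by (simp add: mult.commute)
  also have "\<dots> = (\<Sum>k\<in>K. complex_of_real ((cmod (\<sigma> k))\<^sup>2))"
    by (rule sum.cong[OF refl]) (metis complex_norm_square mult.commute)
  finally show "Im (qF n F f) = 0 \<and> 0 \<le> Re (qF n F f)"
    by (simp add: sum_nonneg)
qed

lemma trace_mult:
  assumes "A \<in> carrier_mat n n" "B \<in> carrier_mat n n"
  shows "mtrace (A * B) = (\<Sum>i<n. \<Sum>j<n. A $$ (i, j) * B $$ (j, i))"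
  using assms unfolding mtrace_def by (simp add: scalar_prod_def atLeast0LessThan)

lemma trace_psd:
  assumes A: "psd n A" and B: "psd n B"
  shows "Im (mtrace (A * B)) = 0 \<and> 0 \<le> Re (mtrace (A * B))"
proof -
  have Ac: "A \<in> carrier_mat n n" and Bc: "B \<in> carrier_mat n n" and hB: "hermF n (ent B)"
    and pB: "posF n (ent B)" and pA: "posF n (ent A)"
    using A B unfolding psd_iff by auto
  obtain m :: nat and w where w: "\<forall>i<n. \<forall>j<n. B $$ (i, j) = (\<Sum>l<m. w l i * cnj (w l j))"
    using gram[OF hB pB] by blast
  have "mtrace (A * B) = (\<Sum>i<n. \<Sum>j<n. \<Sum>l<m. cnj (w l i) * A $$ (i, j) * w l j)"
    unfolding trace_mult[OF Ac Bc] using w by (simp add: sum_distrib_left mult.commute mult.left_commute)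
  also have "\<dots> = (\<Sum>l<m. qF n (ent A) (w l))"
    unfolding qF_def by (rule sum_swap3)
  finally show ?thesis using pA unfolding posF_def by (simp add: sum_nonneg)
qed


lemma qF_congF: "(\<And>a b. a < n \<Longrightarrow> b < n \<Longrightarrow> F a b = G a b) \<Longrightarrow> qF n F f = qF n G f"
  unfolding qF_def by (intro sum.cong refl) auto

lemma qF_sum: "qF n (\<lambda>a b. \<Sum>i\<in>I. G i a b) f = (\<Sum>i\<in>I. qF n (G i) f)"
proof -
  have "qF n (\<lambda>a b. \<Sum>i\<in>I. G i a b) f = (\<Sum>a<n. \<Sum>b<n. \<Sum>i\<in>I. cnj (f a) * G i a b * f b)"
    unfolding qF_def by (simp add: sum_distrib_left sum_distrib_right)
  also have "\<dots> = (\<Sum>i\<in>I. qF n (G i) f)" unfolding qF_def by (rule sum_swap3)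
  finally show ?thesis .
qed

lemma qF_diff: "qF n (\<lambda>a b. F a b - G a b) f = qF n F f - qF n G f"
  unfolding qF_def by (simp add: algebra_simps sum_subtractf)

lemma qF_add: "qF n (\<lambda>a b. F a b + G a b) f = qF n F f + qF n G f"
  unfolding qF_def by (simp add: algebra_simps sum.distrib)

lemma qF_scale: "qF n (\<lambda>a b. c * F a b) f = c * qF n F f"
  unfolding qF_def by (simp add: algebra_simps sum_distrib_left)

lemma avg_carrier: "avg_state n I \<eta> \<rho> \<in> carrier_mat n n"
  unfolding avg_state_def by simp

lemma avg_index: "a < n \<Longrightarrow> b < n \<Longrightarrow>
    avg_state n I \<eta> \<rho> $$ (a, b) = (\<Sum>i\<in>I. complex_of_real (\<eta> i) * \<rho> i $$ (a, b))"
  unfolding avg_state_def by simp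

lemma trace_avg:
  assumes M: "M \<in> carrier_mat n n" and R: "\<forall>i\<in>I. \<rho> i \<in> carrier_mat n n"
  shows "mtrace (avg_state n I \<eta> \<rho> * M) = (\<Sum>i\<in>I. complex_of_real (\<eta> i) * mtrace (\<rho> i * M))"
proof -
  have "mtrace (avg_state n I \<eta> \<rho> * M) =
      (\<Sum>a<n. \<Sum>b<n. \<Sum>i\<in>I. complex_of_real (\<eta> i) * (\<rho> i $$ (a, b) * M $$ (b, a)))"
    unfolding trace_mult[OF avg_carrier M] by (simp add: avg_index sum_distrib_right mult.assoc)
  also have "\<dots> = (\<Sum>i\<in>I. \<Sum>a<n. \<Sum>b<n. complex_of_real (\<eta> i) * (\<rho> i $$ (a, b) * M $$ (b, a)))"
    by (rule sum_swap3)
  also have "\<dots> = (\<Sum>i\<in>I. complex_of_real (\<eta> i) * mtrace (\<rho> i * M))"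
  proof (intro sum.cong refl)
    fix i assume "i \<in> I"
    then have "\<rho> i \<in> carrier_mat n n" using R by blast
    then show "(\<Sum>a<n. \<Sum>b<n. complex_of_real (\<eta> i) * (\<rho> i $$ (a, b) * M $$ (b, a))) =
        complex_of_real (\<eta> i) * mtrace (\<rho> i * M)"
      by (simp add: trace_mult[OF _ M] sum_distrib_left)
  qed
  finally show ?thesis .
qed

lemma conf_bdd:
  assumes fin: "finite I" and pos: "\<forall>i\<in>I. 0 \<le> \<eta> i \<and> psd n (\<rho> i)" and x: "x \<in> I"
  shows "bdd_above {\<eta> x * Re (mtrace (\<rho> x * M x)) / Re (mtrace (avg_state n I \<eta> \<rho> * M x)) | Mq M.
     measurement n I Mq M \<and> 0 < Re (mtrace (avg_state n I \<eta> \<rho> * M x))}"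
proof (rule bdd_aboveI[where M=1])
  fix y assume "y \<in> {\<eta> x * Re (mtrace (\<rho> x * M x)) / Re (mtrace (avg_state n I \<eta> \<rho> * M x)) | Mq M.
     measurement n I Mq M \<and> 0 < Re (mtrace (avg_state n I \<eta> \<rho> * M x))}"
  then obtain Mq M where y: "y = \<eta> x * Re (mtrace (\<rho> x * M x)) / Re (mtrace (avg_state n I \<eta> \<rho> * M x))"
    and m: "measurement n I Mq M" and d: "0 < Re (mtrace (avg_state n I \<eta> \<rho> * M x))" by blast
  have Mx: "psd n (M x)" using m x unfolding measurement_def by blast
  then have Mc: "M x \<in> carrier_mat n n" unfolding psd_iff by blast
  have R: "\<forall>i\<in>I. \<rho> i \<in> carrier_mat n n" using pos unfolding psd_iff by blast
  have tr: "Re (mtrace (avg_state n I \<eta> \<rho> * M x)) = (\<Sum>i\<in>I. \<eta> i * Re (mtrace (\<rho> i * M x)))"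
    unfolding trace_avg[OF Mc R] by simp
  have "\<eta> x * Re (mtrace (\<rho> x * M x)) \<le> (\<Sum>i\<in>I. \<eta> i * Re (mtrace (\<rho> i * M x)))"
  proof (rule member_le_sum[OF x _ fin])
    fix i assume "i \<in> I - {x}"
    then show "0 \<le> \<eta> i * Re (mtrace (\<rho> i * M x))"
      using pos trace_psd[OF _ Mx, of "\<rho> i"] by simp
  qed
  then show "y \<le> 1" unfolding y using d tr by simp
qed

lemma cs_real:
  fixes a b :: "'a \<Rightarrow> real"
  shows "(\<Sum>i\<in>I. a i * b i)\<^sup>2 \<le> (\<Sum>i\<in>I. (a i)\<^sup>2) * (\<Sum>i\<in>I. (b i)\<^sup>2)"
proof (cases "(\<Sum>i\<in>I. (b i)\<^sup>2) > 0")
  case False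
  then consider "\<And>i. i\<in>I \<Longrightarrow> b i = 0" | "infinite I"
    by (metis (mono_tags, lifting) sum_pos2 zero_le_power2 zero_less_power2)
  thus ?thesis
    by fastforce
next
  case True
  define r where "r \<equiv> (\<Sum>i\<in>I. a i * b i) / (\<Sum>i\<in>I. (b i)\<^sup>2)"
  have "0 \<le> (\<Sum>i\<in>I. (a i - r * b i)\<^sup>2)"
    by (simp add: sum_nonneg)
  also have "... = (\<Sum>i\<in>I. (a i)\<^sup>2) - 2 * r * (\<Sum>i\<in>I. a i * b i) + r\<^sup>2 * (\<Sum>i\<in>I. (b i)\<^sup>2)"
    by (simp add: algebra_simps power2_eq_square sum_distrib_left flip: sum.distrib)
  also have "\<dots> = (\<Sum>i\<in>I. (a i)\<^sup>2) - ((\<Sum>i\<in>I. a i * b i))\<^sup>2 / (\<Sum>i\<in>I. (b i)\<^sup>2)"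
    by (simp add: r_def power2_eq_square)
  finally show ?thesis
    using True by (simp add: field_simps)
qed

lemma cs_complex:
  "(cmod (\<Sum>i<n. cnj (g i) * f i))\<^sup>2 \<le> (\<Sum>i<n. (cmod (g i))\<^sup>2) * (\<Sum>i<n. (cmod (f i))\<^sup>2)"
proof -
  have "cmod (\<Sum>i<n. cnj (g i) * f i) \<le> (\<Sum>i<n. cmod (g i) * cmod (f i))"
    by (rule order_trans[OF norm_sum]) (simp add: norm_mult)
  then have "(cmod (\<Sum>i<n. cnj (g i) * f i))\<^sup>2 \<le> (\<Sum>i<n. cmod (g i) * cmod (f i))\<^sup>2"
    by (rule power_mono) simp
  also have "\<dots> \<le> (\<Sum>i<n. (cmod (g i))\<^sup>2) * (\<Sum>i<n. (cmod (f i))\<^sup>2)" by (rule cs_real)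
  finally show ?thesis .
qed


lemma psd_zero: "psd n (0\<^sub>m n n)"
  unfolding psd_iff hermF_def posF_def qF_def by simp

lemma psd_rank1:
  assumes t: "0 \<le> t"
  shows "psd n (mat n n (\<lambda>(a, b). complex_of_real t * (f a * cnj (f b))))"
  unfolding psd_iff
proof (intro conjI)
  show "hermF n (ent (mat n n (\<lambda>(a, b). complex_of_real t * (f a * cnj (f b)))))"
    unfolding hermF_def by simp
  show "posF n (ent (mat n n (\<lambda>(a, b). complex_of_real t * (f a * cnj (f b)))))"
  proof (rule posF_gram[where K="{0::nat}" and u="\<lambda>_ a. complex_of_real (sqrt t) * f a"])
    fix i j assume "i < n" "j < n"
    moreover have "complex_of_real (sqrt t) * complex_of_real (sqrt t) = complex_of_real t"
      using t by (simp flip: of_real_mult)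
    ultimately show "ent (mat n n (\<lambda>(a, b). complex_of_real t * (f a * cnj (f b)))) i j =
      (\<Sum>k\<in>{0::nat}. complex_of_real (sqrt t) * f i * cnj (complex_of_real (sqrt t) * f j))"
      by (simp add: algebra_simps)
  qed simp
qed simp

lemma trace_rank1:
  assumes A: "A \<in> carrier_mat n n"
  shows "mtrace (A * mat n n (\<lambda>(a, b). complex_of_real t * (f a * cnj (f b)))) = complex_of_real t * qF n (ent A) f"
  unfolding trace_mult[OF A mat_carrier] qF_def
  by (simp add: sum_distrib_left algebra_simps)

lemma psd_one_minus_rank1:
  assumes N: "0 < (\<Sum>i<n. (cmod (f i))\<^sup>2)"
  defines "t \<equiv> 1 / (\<Sum>i<n. (cmod (f i))\<^sup>2)"
  shows "psd n (1\<^sub>m n - mat n n (\<lambda>(a, b). complex_of_real t * (f a * cnj (f b))))"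
  unfolding psd_iff
proof (intro conjI)
  define R where "R = mat n n (\<lambda>(a, b). complex_of_real t * (f a * cnj (f b)))"
  have ent: "(1\<^sub>m n - R) $$ (a, b) = (if a = b then 1 else 0) - complex_of_real t * (f a * cnj (f b))"
    if "a < n" "b < n" for a b
    using that unfolding R_def by simp
  show "1\<^sub>m n - mat n n (\<lambda>(a, b). complex_of_real t * (f a * cnj (f b))) \<in> carrier_mat n n"
    by (rule minus_carrier_mat) simp
  show "hermF n (ent (1\<^sub>m n - mat n n (\<lambda>(a, b). complex_of_real t * (f a * cnj (f b)))))"
    unfolding hermF_def R_def[symmetric]
  proof (intro allI impI)
    fix a b assume ab: "a < n" "b < n"
    show "(1\<^sub>m n - R) $$ (a, b) = cnj ((1\<^sub>m n - R) $$ (b, a))"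
      unfolding ent[OF ab] ent[OF ab(2,1)] by auto
  qed
  show "posF n (ent (1\<^sub>m n - mat n n (\<lambda>(a, b). complex_of_real t * (f a * cnj (f b)))))"
    unfolding posF_def R_def[symmetric]
  proof
    fix g :: "nat \<Rightarrow> complex"
    define \<sigma> where "\<sigma> = (\<Sum>a<n. cnj (g a) * f a)"
    define S where "S = (\<Sum>a<n. (cmod (g a))\<^sup>2)"
    have e1: "qF n (ent (1\<^sub>m n - R)) g =
        qF n (\<lambda>a b. if a = b then 1 else 0) g - complex_of_real t * qF n (\<lambda>a b. f a * cnj (f b)) g"
    proof -
      have "qF n (ent (1\<^sub>m n - R)) g =
          qF n (\<lambda>a b. (if a = b then 1 else 0) - complex_of_real t * (f a * cnj (f b))) g"
        by (rule qF_congF) (rule ent)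
      also have "\<dots> = qF n (\<lambda>a b. if a = b then 1 else 0) g -
          qF n (\<lambda>a b. complex_of_real t * (f a * cnj (f b))) g"
        by (rule qF_diff)
      also have "qF n (\<lambda>a b. complex_of_real t * (f a * cnj (f b))) g =
          complex_of_real t * qF n (\<lambda>a b. f a * cnj (f b)) g"
        by (rule qF_scale)
      finally show ?thesis .
    qed
    have e2: "qF n (\<lambda>a b. if a = b then 1 else 0) g = complex_of_real S"
    proof -
      have "qF n (\<lambda>a b. if a = b then 1 else 0) g = (\<Sum>a<n. cnj (g a) * g a)"
        unfolding qF_def
      proof (intro sum.cong refl)
        fix a assume a: "a \<in> {..<n}"
        have "(\<Sum>b<n. cnj (g a) * (if a = b then 1 else 0) * g b) = (\<Sum>b<n. if b = a then cnj (g a) * g b else 0)"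
          by (intro sum.cong refl) auto
        also have "\<dots> = cnj (g a) * g a" using a by (simp add: sum_delta_lt)
        finally show "(\<Sum>b<n. cnj (g a) * (if a = b then 1 else 0) * g b) = cnj (g a) * g a" .
      qed
      also have "\<dots> = (\<Sum>a<n. complex_of_real ((cmod (g a))\<^sup>2))"
        by (rule sum.cong[OF refl]) (metis complex_norm_square mult.commute)
      finally show ?thesis unfolding S_def by simp
    qed
    have e3: "qF n (\<lambda>a b. f a * cnj (f b)) g = complex_of_real ((cmod \<sigma>)\<^sup>2)"
    proof -
      have "qF n (\<lambda>a b. f a * cnj (f b)) g = (\<Sum>a<n. \<Sum>b<n. (cnj (g a) * f a) * (cnj (f b) * g b))"
        unfolding qF_def by (simp only: mult.assoc)
      also have "\<dots> = \<sigma> * (\<Sum>b<n. cnj (f b) * g b)"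
        unfolding \<sigma>_def by (simp only: sum_product)
      also have "(\<Sum>b<n. cnj (f b) * g b) = cnj \<sigma>"
        unfolding \<sigma>_def by (simp add: mult.commute)
      also have "\<sigma> * cnj \<sigma> = complex_of_real ((cmod \<sigma>)\<^sup>2)"
        by (metis complex_norm_square)
      finally show ?thesis .
    qed
    have q: "qF n (ent (1\<^sub>m n - R)) g = complex_of_real (S - t * (cmod \<sigma>)\<^sup>2)"
      unfolding e1 e2 e3 by simp
    have cs: "(cmod \<sigma>)\<^sup>2 \<le> S * (\<Sum>i<n. (cmod (f i))\<^sup>2)"
      unfolding \<sigma>_def S_def by (rule cs_complex)
    have "t * (cmod \<sigma>)\<^sup>2 \<le> S"
    proof -
      have "(cmod \<sigma>)\<^sup>2 / (\<Sum>i<n. (cmod (f i))\<^sup>2) \<le> S"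
        using cs N by (simp add: pos_divide_le_eq)
      then show ?thesis unfolding t_def by simp
    qed
    then show "Im (qF n (ent (1\<^sub>m n - R)) g) = 0 \<and> 0 \<le> Re (qF n (ent (1\<^sub>m n - R)) g)"
      unfolding q by simp
  qed
qed


lemma avg_dims[simp]: "dim_row (avg_state n I \<eta> \<rho>) = n" "dim_col (avg_state n I \<eta> \<rho>) = n"
  unfolding avg_state_def by simp_all

lemma conf_upper:
  assumes fin: "finite I" and pos: "\<forall>i\<in>I. 0 < \<eta> i \<and> psd n (\<rho> i)" and x: "x \<in> I"
  shows "psd n (complex_of_real (max_conf_value n I \<eta> \<rho> x) \<cdot>\<^sub>m avg_state n I \<eta> \<rho> - complex_of_real (\<eta> x) \<cdot>\<^sub>m \<rho> x)"
proof -
  define C where "C = max_conf_value n I \<eta> \<rho> x"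
  define A where "A = avg_state n I \<eta> \<rho>"
  define P where "P = complex_of_real C \<cdot>\<^sub>m A - complex_of_real (\<eta> x) \<cdot>\<^sub>m \<rho> x"
  have Rc: "\<forall>i\<in>I. \<rho> i \<in> carrier_mat n n" and Rh: "\<forall>i\<in>I. hermF n (ent (\<rho> i))"
    and Rp: "\<forall>i\<in>I. posF n (ent (\<rho> i))"
    using pos unfolding psd_iff by auto
  have Rxc: "\<rho> x \<in> carrier_mat n n" using Rc x by blast
  have Ac: "A \<in> carrier_mat n n" unfolding A_def by (rule avg_carrier)
  have Pent: "P $$ (a, b) = complex_of_real C * (\<Sum>i\<in>I. complex_of_real (\<eta> i) * \<rho> i $$ (a, b))
      - complex_of_real (\<eta> x) * \<rho> x $$ (a, b)" if ab: "a < n" "b < n" for a b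
  proof -
    have "P $$ (a, b) = (complex_of_real C \<cdot>\<^sub>m A) $$ (a, b) - (complex_of_real (\<eta> x) \<cdot>\<^sub>m \<rho> x) $$ (a, b)"
      unfolding P_def using ab Rxc by (intro index_minus_mat(1)) auto
    also have "\<dots> = complex_of_real C * A $$ (a, b) - complex_of_real (\<eta> x) * \<rho> x $$ (a, b)"
      using ab Rxc Ac by simp
    finally show ?thesis unfolding A_def using ab by (simp add: avg_index)
  qed
  have Pc: "P \<in> carrier_mat n n" unfolding P_def
    by (rule minus_carrier_mat) (use Rxc in simp)
  have Ph: "hermF n (ent P)" unfolding hermF_def
  proof (intro allI impI)
    fix a b assume ab: "a < n" "b < n"
    have "(\<Sum>i\<in>I. complex_of_real (\<eta> i) * \<rho> i $$ (a, b)) = (\<Sum>i\<in>I. complex_of_real (\<eta> i) * cnj (\<rho> i $$ (b, a)))"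
    proof (intro sum.cong refl)
      fix i assume "i \<in> I"
      then have "\<rho> i $$ (a, b) = cnj (\<rho> i $$ (b, a))" using Rh ab unfolding hermF_def by blast
      then show "complex_of_real (\<eta> i) * \<rho> i $$ (a, b) = complex_of_real (\<eta> i) * cnj (\<rho> i $$ (b, a))" by simp
    qed
    moreover have "\<rho> x $$ (a, b) = cnj (\<rho> x $$ (b, a))" using Rh ab x unfolding hermF_def by blast
    ultimately show "P $$ (a, b) = cnj (P $$ (b, a))"
      unfolding Pent[OF ab] Pent[OF ab(2,1)] by simp
  qed
  have Pp: "posF n (ent P)" unfolding posF_def
  proof
    fix f :: "nat \<Rightarrow> complex"
    define q where "q i = qF n (ent (\<rho> i)) f" for i
    have qr: "q i = complex_of_real (Re (q i))" and qnn: "0 \<le> Re (q i)" if "i \<in> I" for i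
      using Rp that unfolding posF_def q_def by (auto simp: complex_eq_iff)
    define Q where "Q = (\<Sum>i\<in>I. \<eta> i * Re (q i))"
    have sumQ: "(\<Sum>i\<in>I. complex_of_real (\<eta> i) * q i) = complex_of_real Q"
    proof -
      have "(\<Sum>i\<in>I. complex_of_real (\<eta> i) * q i) = (\<Sum>i\<in>I. complex_of_real (\<eta> i * Re (q i)))"
        by (intro sum.cong refl) (subst qr, auto)
      then show ?thesis unfolding Q_def by simp
    qed
    have "qF n (ent P) f = qF n (\<lambda>a b. complex_of_real C * (\<Sum>i\<in>I. complex_of_real (\<eta> i) * \<rho> i $$ (a, b))
      - complex_of_real (\<eta> x) * \<rho> x $$ (a, b)) f"
      by (rule qF_congF) (rule Pent)
    also have "\<dots> = complex_of_real C * (\<Sum>i\<in>I. complex_of_real (\<eta> i) * q i) - complex_of_real (\<eta> x) * q x"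
      unfolding q_def by (simp only: qF_diff qF_scale qF_sum)
    also have "\<dots> = complex_of_real (C * Q - \<eta> x * Re (q x))"
      unfolding sumQ by (subst qr[OF x]) simp
    finally have qP: "qF n (ent P) f = complex_of_real (C * Q - \<eta> x * Re (q x))" .
    have hxQ: "\<eta> x * Re (q x) \<le> Q" unfolding Q_def
    proof (rule member_le_sum[OF x _ fin])
      fix i assume "i \<in> I - {x}"
      then show "0 \<le> \<eta> i * Re (q i)" using pos qnn by auto
    qed
    have hx0: "0 \<le> \<eta> x * Re (q x)" using pos qnn[OF x] x by auto
    have "0 \<le> C * Q - \<eta> x * Re (q x)"
    proof (cases "Q = 0")
      case True
      then show ?thesis using hxQ hx0 by simp
    next
      case False
      then have Qp: "0 < Q" using hxQ hx0 by simp
      define N where "N = (\<Sum>i<n. (cmod (f i))\<^sup>2)"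
      have Np: "0 < N"
      proof (rule ccontr)
        assume "\<not> 0 < N"
        then have "N = 0" unfolding N_def by (metis (no_types, lifting) not_less order_antisym sum_nonneg zero_le_power2)
        then have "\<forall>i\<in>{..<n}. (cmod (f i))\<^sup>2 = 0" unfolding N_def
          by (subst sum_nonneg_eq_0_iff[symmetric]) auto
        then have f0: "\<And>i. i < n \<Longrightarrow> f i = 0" by simp
        have "q i = 0" for i unfolding q_def using qF_cong[of n f "\<lambda>_. 0"] f0 by simp
        then have "Q = 0" unfolding Q_def by simp
        then show False using Qp by simp
      qed
      define t where "t = 1 / N"
      have tp: "0 < t" using Np unfolding t_def by simp
      define R where "R = mat n n (\<lambda>(a, b). complex_of_real t * (f a * cnj (f b)))"
      have Rc': "R \<in> carrier_mat n n" unfolding R_def by simp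
      define M' where "M' i = (if i = x then R else 0\<^sub>m n n)" for i
      have meas: "measurement n I (1\<^sub>m n - R) M'"
        unfolding measurement_def
      proof (intro conjI ballI allI impI)
        show "psd n (1\<^sub>m n - R)" unfolding R_def t_def N_def by (rule psd_one_minus_rank1) (use Np N_def in simp)
        fix i assume "i \<in> I"
        show "psd n (M' i)" unfolding M'_def R_def using psd_rank1[of t n f] tp psd_zero by auto
      next
        fix a b assume ab: "a < n" "b < n"
        have "(\<Sum>i\<in>I. M' i $$ (a, b)) = (\<Sum>i\<in>I. if i = x then R $$ (a, b) else 0)"
          unfolding M'_def using ab by (intro sum.cong refl) auto
        also have "\<dots> = R $$ (a, b)" using x fin by (simp add: sum.delta)
        finally show "(1\<^sub>m n - R) $$ (a, b) + (\<Sum>i\<in>I. M' i $$ (a, b)) = 1\<^sub>m n $$ (a, b)"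
          using ab Rc' by simp
      qed
      have trR: "mtrace (\<rho> i * R) = complex_of_real t * q i" if "i \<in> I" for i
        unfolding R_def q_def by (rule trace_rank1) (use Rc that in blast)
      have trA: "mtrace (A * R) = complex_of_real (t * Q)"
      proof -
        have "mtrace (A * R) = (\<Sum>i\<in>I. complex_of_real (\<eta> i) * mtrace (\<rho> i * R))"
          unfolding A_def by (rule trace_avg[OF Rc' Rc])
        also have "\<dots> = (\<Sum>i\<in>I. complex_of_real t * (complex_of_real (\<eta> i) * q i))"
          by (intro sum.cong refl) (simp add: trR)
        also have "\<dots> = complex_of_real t * complex_of_real Q"
          unfolding sum_distrib_left[symmetric] sumQ ..
        finally show ?thesis by simp
      qed
      have trX: "Re (mtrace (\<rho> x * R)) = t * Re (q x)"
        using trR[OF x] by (subst qr[OF x]) simp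
      have M'x: "M' x = R" unfolding M'_def by simp
      have dpos: "0 < Re (mtrace (A * M' x))" unfolding M'x trA using tp Qp by simp
      have mem: "\<eta> x * Re (mtrace (\<rho> x * M' x)) / Re (mtrace (A * M' x)) \<in>
        {\<eta> x * Re (mtrace (\<rho> x * M x)) / Re (mtrace (avg_state n I \<eta> \<rho> * M x)) | Mq M.
         measurement n I Mq M \<and> 0 < Re (mtrace (avg_state n I \<eta> \<rho> * M x))}"
        using meas dpos unfolding A_def by blast
      have bdd: "bdd_above {\<eta> x * Re (mtrace (\<rho> x * M x)) / Re (mtrace (avg_state n I \<eta> \<rho> * M x)) | Mq M.
         measurement n I Mq M \<and> 0 < Re (mtrace (avg_state n I \<eta> \<rho> * M x))}"
        by (rule conf_bdd[OF fin _ x]) (use pos in auto)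
      have "\<eta> x * Re (mtrace (\<rho> x * M' x)) / Re (mtrace (A * M' x)) \<le> C"
        unfolding C_def max_conf_value_def by (rule cSup_upper[OF mem bdd])
      moreover have "\<eta> x * Re (mtrace (\<rho> x * M' x)) / Re (mtrace (A * M' x)) = \<eta> x * Re (q x) / Q"
        unfolding M'x trA trX using tp by simp
      ultimately have "\<eta> x * Re (q x) / Q \<le> C" by simp
      then show ?thesis using Qp by (simp add: pos_divide_le_eq)
    qed
    then show "Im (qF n (ent P) f) = 0 \<and> 0 \<le> Re (qF n (ent P) f)" unfolding qP by simp
  qed
  show ?thesis using Pc Ph Pp unfolding psd_iff P_def C_def A_def by blast
qed

lemma sum_divmod:
  fixes g :: "nat \<Rightarrow> 'a::comm_monoid_add"
  shows "(\<Sum>k<a*b. g k) = (\<Sum>k1<a. \<Sum>k2<b. g (k1 * b + k2))"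
proof -
  have "(\<Sum>k<a*b. g k) = (\<Sum>m<a. sum g {m * b..<m * b + b})"
    by (rule sum.nat_group[symmetric])
  also have "\<dots> = (\<Sum>m<a. \<Sum>k2<b. g (m * b + k2))"
  proof (rule sum.cong[OF refl])
    fix m
    have "sum g {0 + m * b..<b + m * b} = (\<Sum>k2\<in>{0..<b}. g (k2 + m * b))"
      by (rule sum.shift_bounds_nat_ivl)
    then show "sum g {m * b..<m * b + b} = (\<Sum>k2<b. g (m * b + k2))"
      by (simp add: atLeast0LessThan add.commute)
  qed
  finally show ?thesis .
qed

lemma sum_divmod':
  fixes h :: "nat \<Rightarrow> nat \<Rightarrow> 'a::comm_monoid_add"
  shows "(\<Sum>k<a*b. h (k div b) (k mod b)) = (\<Sum>k1<a. \<Sum>k2<b. h k1 k2)"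
  unfolding sum_divmod by (intro sum.cong refl) auto

lemma kron_carrier:
  "A \<in> carrier_mat a a \<Longrightarrow> B \<in> carrier_mat b b \<Longrightarrow> kron_mat A B \<in> carrier_mat (a*b) (a*b)"
  unfolding kron_mat_def by simp

lemma kron_index:
  assumes "A \<in> carrier_mat a a" "B \<in> carrier_mat b b" "i < a*b" "j < a*b"
  shows "kron_mat A B $$ (i, j) = A $$ (i div b, j div b) * B $$ (i mod b, j mod b)"
  using assms unfolding kron_mat_def by simp

lemma divmod_lt:
  assumes "i < a * (b::nat)"
  shows "i div b < a" "i mod b < b"
proof -
  have b: "0 < b" using assms by (cases b) auto
  show "i div b < a" using assms by (intro less_mult_imp_div_less) simp
  show "i mod b < b" using b by simp
qed

lemma kron_mult:
  assumes A: "A \<in> carrier_mat a a" and B: "B \<in> carrier_mat b b"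
    and C: "C \<in> carrier_mat a a" and D: "D \<in> carrier_mat b b"
  shows "kron_mat A B * kron_mat C D = kron_mat (A * C) (B * D)"
proof (rule eq_matI)
  have AC: "A * C \<in> carrier_mat a a" and BD: "B * D \<in> carrier_mat b b" using A B C D by auto
  show "dim_row (kron_mat A B * kron_mat C D) = dim_row (kron_mat (A * C) (B * D))"
    "dim_col (kron_mat A B * kron_mat C D) = dim_col (kron_mat (A * C) (B * D))"
    using kron_carrier[OF A B] kron_carrier[OF C D] kron_carrier[OF AC BD] by auto
  fix i j assume "i < dim_row (kron_mat (A * C) (B * D))" "j < dim_col (kron_mat (A * C) (B * D))"
  then have ij: "i < a*b" "j < a*b" using kron_carrier[OF AC BD] by auto
  have "(kron_mat A B * kron_mat C D) $$ (i, j) =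
      (\<Sum>k<a*b. kron_mat A B $$ (i, k) * kron_mat C D $$ (k, j))"
    using kron_carrier[OF A B] kron_carrier[OF C D] ij by (simp add: scalar_prod_def atLeast0LessThan)
  also have "\<dots> = (\<Sum>k<a*b. (A $$ (i div b, k div b) * C $$ (k div b, j div b)) *
      (B $$ (i mod b, k mod b) * D $$ (k mod b, j mod b)))"
  proof (intro sum.cong refl)
    fix k assume "k \<in> {..<a*b}"
    then show "kron_mat A B $$ (i, k) * kron_mat C D $$ (k, j) = (A $$ (i div b, k div b) * C $$ (k div b, j div b)) *
      (B $$ (i mod b, k mod b) * D $$ (k mod b, j mod b))"
      using kron_index[OF A B] kron_index[OF C D] ij by (simp add: algebra_simps)
  qed
  also have "\<dots> = (\<Sum>k1<a. \<Sum>k2<b. (A $$ (i div b, k1) * C $$ (k1, j div b)) * (B $$ (i mod b, k2) * D $$ (k2, j mod b)))"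
    by (rule sum_divmod'[where h="\<lambda>k1 k2. (A $$ (i div b, k1) * C $$ (k1, j div b)) * (B $$ (i mod b, k2) * D $$ (k2, j mod b))"])
  also have "\<dots> = (\<Sum>k1<a. A $$ (i div b, k1) * C $$ (k1, j div b)) * (\<Sum>k2<b. B $$ (i mod b, k2) * D $$ (k2, j mod b))"
    by (simp only: sum_product)
  also have "\<dots> = (A * C) $$ (i div b, j div b) * (B * D) $$ (i mod b, j mod b)"
    using A B C D divmod_lt[OF ij(1)] divmod_lt[OF ij(2)] by (simp add: scalar_prod_def atLeast0LessThan)
  also have "\<dots> = kron_mat (A * C) (B * D) $$ (i, j)"
    using kron_index[OF AC BD ij] by simp
  finally show "(kron_mat A B * kron_mat C D) $$ (i, j) = kron_mat (A * C) (B * D) $$ (i, j)" .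
qed

lemma kron_trace:
  assumes A: "A \<in> carrier_mat a a" and B: "B \<in> carrier_mat b b"
  shows "mtrace (kron_mat A B) = mtrace A * mtrace B"
proof -
  have "mtrace (kron_mat A B) = (\<Sum>k<a*b. A $$ (k div b, k div b) * B $$ (k mod b, k mod b))"
    unfolding mtrace_def using kron_carrier[OF A B] kron_index[OF A B] by simp
  also have "\<dots> = (\<Sum>k1<a. \<Sum>k2<b. A $$ (k1, k1) * B $$ (k2, k2))"
    by (rule sum_divmod'[where h="\<lambda>k1 k2. A $$ (k1, k1) * B $$ (k2, k2)"])
  also have "\<dots> = mtrace A * mtrace B"
    unfolding mtrace_def using A B by (simp add: sum_product)
  finally show ?thesis .
qed

lemma kron_smult:
  assumes A: "A \<in> carrier_mat a a" and B: "B \<in> carrier_mat b b"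
  shows "kron_mat (c \<cdot>\<^sub>m A) (e \<cdot>\<^sub>m B) = (c * e) \<cdot>\<^sub>m kron_mat A B"
proof (rule eq_matI)
  have cA: "c \<cdot>\<^sub>m A \<in> carrier_mat a a" and eB: "e \<cdot>\<^sub>m B \<in> carrier_mat b b" using A B by auto
  show "dim_row (kron_mat (c \<cdot>\<^sub>m A) (e \<cdot>\<^sub>m B)) = dim_row ((c * e) \<cdot>\<^sub>m kron_mat A B)"
    "dim_col (kron_mat (c \<cdot>\<^sub>m A) (e \<cdot>\<^sub>m B)) = dim_col ((c * e) \<cdot>\<^sub>m kron_mat A B)"
    using kron_carrier[OF A B] kron_carrier[OF cA eB] by auto
  fix i j assume "i < dim_row ((c * e) \<cdot>\<^sub>m kron_mat A B)" "j < dim_col ((c * e) \<cdot>\<^sub>m kron_mat A B)"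
  then have ij: "i < a*b" "j < a*b" using kron_carrier[OF A B] by auto
  show "kron_mat (c \<cdot>\<^sub>m A) (e \<cdot>\<^sub>m B) $$ (i, j) = ((c * e) \<cdot>\<^sub>m kron_mat A B) $$ (i, j)"
    using kron_index[OF cA eB ij] kron_index[OF A B ij] kron_carrier[OF A B] ij A B
      divmod_lt[OF ij(1)] divmod_lt[OF ij(2)] by simp
qed

lemma kron_split:
  assumes X: "X \<in> carrier_mat a a" and Y: "Y \<in> carrier_mat a a"
    and T: "T \<in> carrier_mat b b" and T': "T' \<in> carrier_mat b b"
  shows "kron_mat (X + Y) T - kron_mat X T' = kron_mat Y T + kron_mat X (T - T')"
proof (rule eq_matI)
  have XY: "X + Y \<in> carrier_mat a a" and TT: "T - T' \<in> carrier_mat b b" using X Y T T' by auto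
  note c = kron_carrier[OF XY T] kron_carrier[OF X T'] kron_carrier[OF Y T] kron_carrier[OF X TT]
  show "dim_row (kron_mat (X + Y) T - kron_mat X T') = dim_row (kron_mat Y T + kron_mat X (T - T'))"
    "dim_col (kron_mat (X + Y) T - kron_mat X T') = dim_col (kron_mat Y T + kron_mat X (T - T'))"
    using c by auto
  fix i j assume "i < dim_row (kron_mat Y T + kron_mat X (T - T'))" "j < dim_col (kron_mat Y T + kron_mat X (T - T'))"
  then have ij: "i < a*b" "j < a*b" using c by auto
  note dm = divmod_lt[OF ij(1)] divmod_lt[OF ij(2)]
  have "(kron_mat (X + Y) T - kron_mat X T') $$ (i, j) = kron_mat (X + Y) T $$ (i, j) - kron_mat X T' $$ (i, j)"
    using c ij by simp
  also have "\<dots> = (X $$ (i div b, j div b) + Y $$ (i div b, j div b)) * T $$ (i mod b, j mod b)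
     - X $$ (i div b, j div b) * T' $$ (i mod b, j mod b)"
    using kron_index[OF XY T ij] kron_index[OF X T' ij] X Y dm by simp
  also have "\<dots> = Y $$ (i div b, j div b) * T $$ (i mod b, j mod b)
     + X $$ (i div b, j div b) * (T $$ (i mod b, j mod b) - T' $$ (i mod b, j mod b))"
    by (simp add: algebra_simps)
  also have "\<dots> = kron_mat Y T $$ (i, j) + kron_mat X (T - T') $$ (i, j)"
    using kron_index[OF Y T ij] kron_index[OF X TT ij] T T' dm by simp
  also have "\<dots> = (kron_mat Y T + kron_mat X (T - T')) $$ (i, j)"
    using c ij by simp
  finally show "(kron_mat (X + Y) T - kron_mat X T') $$ (i, j) = (kron_mat Y T + kron_mat X (T - T')) $$ (i, j)" .
qed

lemma psd_add:
  assumes "psd n A" "psd n B"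
  shows "psd n (A + B)"
proof -
  have A: "A \<in> carrier_mat n n" "hermF n (ent A)" "posF n (ent A)"
    and B: "B \<in> carrier_mat n n" "hermF n (ent B)" "posF n (ent B)" using assms unfolding psd_iff by auto
  have e: "(A + B) $$ (i, j) = A $$ (i, j) + B $$ (i, j)" if "i < n" "j < n" for i j
    using that B by simp
  have "hermF n (ent (A + B))" unfolding hermF_def
  proof (intro allI impI)
    fix i j assume ij: "i < n" "j < n"
    show "(A + B) $$ (i, j) = cnj ((A + B) $$ (j, i))"
    proof -
      have "A $$ (i, j) = cnj (A $$ (j, i))" "B $$ (i, j) = cnj (B $$ (j, i))"
        using A(2) B(2) ij unfolding hermF_def by blast+
      then show ?thesis unfolding e[OF ij] e[OF ij(2,1)] by simp
    qed
  qed
  moreover have "posF n (ent (A + B))" unfolding posF_def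
  proof
    fix f :: "nat \<Rightarrow> complex"
    have "qF n (ent (A + B)) f = qF n (ent A) f + qF n (ent B) f"
      by (subst qF_congF[where G="\<lambda>i j. A $$ (i, j) + B $$ (i, j)"]) (auto simp: e qF_add)
    then show "Im (qF n (ent (A + B)) f) = 0 \<and> 0 \<le> Re (qF n (ent (A + B)) f)"
      using A(3) B(3) unfolding posF_def by (metis add_nonneg_nonneg plus_complex.sel add_0)
  qed
  moreover have "A + B \<in> carrier_mat n n" using A B by simp
  ultimately show ?thesis unfolding psd_iff by blast
qed

lemma psd_smult:
  assumes c: "0 \<le> c" and A: "psd n A"
  shows "psd n (complex_of_real c \<cdot>\<^sub>m A)"
proof -
  have A': "A \<in> carrier_mat n n" "hermF n (ent A)" "posF n (ent A)" using A unfolding psd_iff by auto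
  have e: "(complex_of_real c \<cdot>\<^sub>m A) $$ (i, j) = complex_of_real c * A $$ (i, j)" if "i < n" "j < n" for i j
    using that A' by simp
  have "hermF n (ent (complex_of_real c \<cdot>\<^sub>m A))" unfolding hermF_def
  proof (intro allI impI)
    fix i j assume ij: "i < n" "j < n"
    show "(complex_of_real c \<cdot>\<^sub>m A) $$ (i, j) = cnj ((complex_of_real c \<cdot>\<^sub>m A) $$ (j, i))"
    proof -
      have "A $$ (i, j) = cnj (A $$ (j, i))"
        using A'(2) ij unfolding hermF_def by blast
      then show ?thesis unfolding e[OF ij] e[OF ij(2,1)] by simp
    qed
  qed
  moreover have "posF n (ent (complex_of_real c \<cdot>\<^sub>m A))" unfolding posF_def
  proof
    fix f :: "nat \<Rightarrow> complex"
    have "qF n (ent (complex_of_real c \<cdot>\<^sub>m A)) f = complex_of_real c * qF n (ent A) f"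
      by (subst qF_congF[where G="\<lambda>i j. complex_of_real c * A $$ (i, j)"]) (auto simp: e qF_scale)
    then show "Im (qF n (ent (complex_of_real c \<cdot>\<^sub>m A)) f) = 0 \<and> 0 \<le> Re (qF n (ent (complex_of_real c \<cdot>\<^sub>m A)) f)"
      using A'(3) c unfolding posF_def by simp
  qed
  moreover have "complex_of_real c \<cdot>\<^sub>m A \<in> carrier_mat n n" using A' by simp
  ultimately show ?thesis unfolding psd_iff by blast
qed

lemma kron_psd:
  assumes A: "psd a A" and B: "psd b B"
  shows "psd (a*b) (kron_mat A B)"
proof -
  have A': "A \<in> carrier_mat a a" "hermF a (ent A)" "posF a (ent A)"
    and B': "B \<in> carrier_mat b b" "hermF b (ent B)" "posF b (ent B)" using A B unfolding psd_iff by auto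
  obtain m1 :: nat and w1 where w1: "\<forall>i<a. \<forall>j<a. A $$ (i, j) = (\<Sum>l<m1. w1 l i * cnj (w1 l j))"
    using gram[OF A'(2,3)] by blast
  obtain m2 :: nat and w2 where w2: "\<forall>i<b. \<forall>j<b. B $$ (i, j) = (\<Sum>l<m2. w2 l i * cnj (w2 l j))"
    using gram[OF B'(2,3)] by blast
  have c: "kron_mat A B \<in> carrier_mat (a*b) (a*b)" by (rule kron_carrier[OF A'(1) B'(1)])
  have h: "hermF (a*b) (ent (kron_mat A B))" unfolding hermF_def
  proof (intro allI impI)
    fix i j assume ij: "i < a*b" "j < a*b"
    note dm = divmod_lt[OF ij(1)] divmod_lt[OF ij(2)]
    show "kron_mat A B $$ (i, j) = cnj (kron_mat A B $$ (j, i))"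
    proof -
      have "A $$ (i div b, j div b) = cnj (A $$ (j div b, i div b))" "B $$ (i mod b, j mod b) = cnj (B $$ (j mod b, i mod b))"
        using A'(2) B'(2) dm unfolding hermF_def by blast+
      then show ?thesis unfolding kron_index[OF A'(1) B'(1) ij] kron_index[OF A'(1) B'(1) ij(2,1)] by simp
    qed
  qed
  have p: "posF (a*b) (ent (kron_mat A B))"
  proof (rule posF_gram[where K="{..<m1} \<times> {..<m2}" and u="\<lambda>(k1, k2) i. w1 k1 (i div b) * w2 k2 (i mod b)"])
    fix i j assume ij: "i < a*b" "j < a*b"
    note dm = divmod_lt[OF ij(1)] divmod_lt[OF ij(2)]
    have "kron_mat A B $$ (i, j) = (\<Sum>k1<m1. w1 k1 (i div b) * cnj (w1 k1 (j div b))) *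
        (\<Sum>k2<m2. w2 k2 (i mod b) * cnj (w2 k2 (j mod b)))"
      unfolding kron_index[OF A'(1) B'(1) ij] using w1 w2 dm by simp
    also have "\<dots> = (\<Sum>k1<m1. \<Sum>k2<m2. (w1 k1 (i div b) * w2 k2 (i mod b)) * cnj (w1 k1 (j div b) * w2 k2 (j mod b)))"
      unfolding sum_product by (intro sum.cong refl) (simp add: algebra_simps)
    also have "\<dots> = (\<Sum>k\<in>{..<m1} \<times> {..<m2}. (\<lambda>(k1, k2) i. w1 k1 (i div b) * w2 k2 (i mod b)) k i *
        cnj ((\<lambda>(k1, k2) i. w1 k1 (i div b) * w2 k2 (i mod b)) k j))"
      by (simp add: sum.cartesian_product case_prod_beta)
    finally show "ent (kron_mat A B) i j = (\<Sum>k\<in>{..<m1} \<times> {..<m2}. (\<lambda>(k1, k2) i. w1 k1 (i div b) * w2 k2 (i mod b)) k i *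
        cnj ((\<lambda>(k1, k2) i. w1 k1 (i div b) * w2 k2 (i mod b)) k j))" .
  qed simp
  show ?thesis using c h p unfolding psd_iff by blast
qed

lemma prod_list_upt: "prod_list (map (d :: nat \<Rightarrow> 'a::comm_monoid_mult) [0..<L]) = (\<Prod>l<L. d l)"
  by (induction L) (simp_all add: mult.commute)

lemma tl_carrier:
  "(\<forall>x\<in>set xs. f x \<in> carrier_mat (d x) (d x)) \<Longrightarrow>
   tensor_list (map f xs) \<in> carrier_mat (prod_list (map d xs)) (prod_list (map d xs))"
  by (induction xs) (auto intro: kron_carrier)

lemma tl_mult:
  "(\<forall>x\<in>set xs. f x \<in> carrier_mat (d x) (d x) \<and> g x \<in> carrier_mat (d x) (d x)) \<Longrightarrow>
   tensor_list (map f xs) * tensor_list (map g xs) = tensor_list (map (\<lambda>x. f x * g x) xs)"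
proof (induction xs)
  case Nil
  then show ?case by simp
next
  case (Cons y ys)
  have cf: "tensor_list (map f ys) \<in> carrier_mat (prod_list (map d ys)) (prod_list (map d ys))"
    by (rule tl_carrier) (use Cons.prems in auto)
  have cg: "tensor_list (map g ys) \<in> carrier_mat (prod_list (map d ys)) (prod_list (map d ys))"
    by (rule tl_carrier) (use Cons.prems in auto)
  have y: "f y \<in> carrier_mat (d y) (d y)" "g y \<in> carrier_mat (d y) (d y)" using Cons.prems by auto
  show ?case using kron_mult[OF y(1) cf y(2) cg] Cons by simp
qed

lemma tl_trace:
  "(\<forall>x\<in>set xs. f x \<in> carrier_mat (d x) (d x)) \<Longrightarrow>
   mtrace (tensor_list (map f xs)) = prod_list (map (\<lambda>x. mtrace (f x)) xs)"
proof (induction xs)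
  case Nil
  then show ?case by (simp add: mtrace_def)
next
  case (Cons y ys)
  have cf: "tensor_list (map f ys) \<in> carrier_mat (prod_list (map d ys)) (prod_list (map d ys))"
    by (rule tl_carrier) (use Cons.prems in auto)
  have y: "f y \<in> carrier_mat (d y) (d y)" using Cons.prems by auto
  show ?case using kron_trace[OF y cf] Cons by simp
qed

lemma tl_smult:
  "(\<forall>x\<in>set xs. f x \<in> carrier_mat (d x) (d x)) \<Longrightarrow>
   tensor_list (map (\<lambda>x. c x \<cdot>\<^sub>m f x) xs) = prod_list (map c xs) \<cdot>\<^sub>m tensor_list (map f xs)"
proof (induction xs)
  case Nil
  then show ?case by (auto intro!: eq_matI)
next
  case (Cons y ys)
  have cf: "tensor_list (map f ys) \<in> carrier_mat (prod_list (map d ys)) (prod_list (map d ys))"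
    by (rule tl_carrier) (use Cons.prems in auto)
  have y: "f y \<in> carrier_mat (d y) (d y)" using Cons.prems by auto
  show ?case using kron_smult[OF y cf, of "c y" "prod_list (map c ys)"] Cons by simp
qed

lemma tl_psd:
  "(\<forall>x\<in>set xs. psd (d x) (f x)) \<Longrightarrow> psd (prod_list (map d xs)) (tensor_list (map f xs))"
proof (induction xs)
  case Nil
  have "psd 1 (1\<^sub>m 1 :: complex mat)"
    unfolding psd_iff hermF_def posF_def qF_def by simp
  then show ?case by simp
next
  case (Cons y ys)
  then show ?case using kron_psd by simp
qed

lemma tl_diff_psd:
  "(\<forall>x\<in>set xs. psd (d x) (X x) \<and> psd (d x) (Y x)) \<Longrightarrow>
   psd (prod_list (map d xs)) (tensor_list (map (\<lambda>x. X x + Y x) xs) - tensor_list (map X xs))"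
proof (induction xs)
  case Nil
  have "(1\<^sub>m 1 - 1\<^sub>m 1 :: complex mat) = 0\<^sub>m 1 1" by (auto intro!: eq_matI)
  have "tensor_list (map (\<lambda>x. X x + Y x) []) - tensor_list (map X []) = 0\<^sub>m 1 1" by (auto intro!: eq_matI)
  moreover have "prod_list (map d []) = 1" by simp
  ultimately show ?case using psd_zero[of 1] by metis
next
  case (Cons y ys)
  have Xc: "\<forall>x\<in>set ys. X x \<in> carrier_mat (d x) (d x)" and Yc: "\<forall>x\<in>set ys. Y x \<in> carrier_mat (d x) (d x)"
    using Cons.prems unfolding psd_iff by auto
  have XYc: "\<forall>x\<in>set ys. X x + Y x \<in> carrier_mat (d x) (d x)" using Xc Yc by auto
  have T: "tensor_list (map (\<lambda>x. X x + Y x) ys) \<in> carrier_mat (prod_list (map d ys)) (prod_list (map d ys))"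
    by (rule tl_carrier[OF XYc])
  have T': "tensor_list (map X ys) \<in> carrier_mat (prod_list (map d ys)) (prod_list (map d ys))"
    by (rule tl_carrier[OF Xc])
  have y: "psd (d y) (X y)" "psd (d y) (Y y)" using Cons.prems by auto
  then have yc: "X y \<in> carrier_mat (d y) (d y)" "Y y \<in> carrier_mat (d y) (d y)" unfolding psd_iff by auto
  have psdT: "psd (prod_list (map d ys)) (tensor_list (map (\<lambda>x. X x + Y x) ys))"
    by (rule tl_psd) (use Cons.prems psd_add in auto)
  have IH: "psd (prod_list (map d ys)) (tensor_list (map (\<lambda>x. X x + Y x) ys) - tensor_list (map X ys))"
    using Cons by auto
  have "tensor_list (map (\<lambda>x. X x + Y x) (y # ys)) - tensor_list (map X (y # ys)) =
      kron_mat (Y y) (tensor_list (map (\<lambda>x. X x + Y x) ys)) +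
      kron_mat (X y) (tensor_list (map (\<lambda>x. X x + Y x) ys) - tensor_list (map X ys))"
    using kron_split[OF yc T T'] by simp
  moreover have "psd (prod_list (map d (y # ys))) (kron_mat (Y y) (tensor_list (map (\<lambda>x. X x + Y x) ys)) +
      kron_mat (X y) (tensor_list (map (\<lambda>x. X x + Y x) ys) - tensor_list (map X ys)))"
    using psd_add[OF kron_psd[OF y(2) psdT] kron_psd[OF y(1) IH]] by simp
  ultimately show ?case by simp
qed

lemma seq_index_0: "seq_index 0 n = {[]}"
  unfolding seq_index_def by auto

lemma seq_index_Suc:
  "seq_index (Suc L) n = (\<lambda>(x, c). x # c) ` ({1..n 0} \<times> seq_index L (\<lambda>l. n (Suc l)))"
proof
  show "seq_index (Suc L) n \<subseteq> (\<lambda>(x, c). x # c) ` ({1..n 0} \<times> seq_index L (\<lambda>l. n (Suc l)))"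
  proof
    fix c assume c: "c \<in> seq_index (Suc L) n"
    then have len: "length c = Suc L" and el: "\<And>l. l < Suc L \<Longrightarrow> c ! l \<in> {1..n l}"
      unfolding seq_index_def by auto
    obtain x c' where xc: "c = x # c'" using len by (cases c) auto
    have x: "x \<in> {1..n 0}" using el[of 0] unfolding xc by simp
    have "length c' = L" using len unfolding xc by simp
    moreover have "c' ! l \<in> {1..n (Suc l)}" if "l < L" for l
      using el[of "Suc l"] that unfolding xc by simp
    ultimately have c': "c' \<in> seq_index L (\<lambda>l. n (Suc l))" unfolding seq_index_def by blast
    show "c \<in> (\<lambda>(x, c). x # c) ` ({1..n 0} \<times> seq_index L (\<lambda>l. n (Suc l)))"
      unfolding xc by (rule image_eqI[where x="(x, c')"]) (use x c' in auto)
  qed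
next
  show "(\<lambda>(x, c). x # c) ` ({1..n 0} \<times> seq_index L (\<lambda>l. n (Suc l))) \<subseteq> seq_index (Suc L) n"
  proof
    fix c assume "c \<in> (\<lambda>(x, c). x # c) ` ({1..n 0} \<times> seq_index L (\<lambda>l. n (Suc l)))"
    then obtain x c' where xc: "c = x # c'" and x: "x \<in> {1..n 0}" and c': "c' \<in> seq_index L (\<lambda>l. n (Suc l))"
      by auto
    have len: "length c' = L" and el: "\<And>l. l < L \<Longrightarrow> c' ! l \<in> {1..n (Suc l)}"
      using c' unfolding seq_index_def by auto
    show "c \<in> seq_index (Suc L) n" unfolding seq_index_def
    proof (intro CollectI conjI allI impI)
      show "length c = Suc L" using len unfolding xc by simp
      fix l assume l: "l < Suc L"
      show "c ! l \<in> {1..n l}"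
      proof (cases l)
        case 0 then show ?thesis using x xc by simp
      next
        case (Suc l') then show ?thesis using el[of l'] xc l by simp
      qed
    qed
  qed
qed

lemma finite_seq_index: "finite (seq_index L n)"
proof (induction L arbitrary: n)
  case 0 then show ?case by (simp add: seq_index_0)
next
  case (Suc L) then show ?case by (simp add: seq_index_Suc)
qed

lemma seq_eta_Cons: "seq_eta (Suc L) \<eta> (x # c) = \<eta> 0 x * seq_eta L (\<lambda>l. \<eta> (Suc l)) c"
  unfolding seq_eta_def prod.lessThan_Suc_shift by simp

lemma upt_Suc_shift: "[0..<Suc L] = 0 # map Suc [0..<L]"
  by (simp add: upt_conv_Cons map_Suc_upt)

lemma seq_rho_Cons: "seq_rho (Suc L) \<rho> (x # c) = kron_mat (\<rho> 0 x) (seq_rho L (\<lambda>l. \<rho> (Suc l)) c)"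
proof -
  have "map (\<lambda>l. \<rho> l ((x # c) ! l)) [0..<Suc L] = \<rho> 0 x # map (\<lambda>l. \<rho> (Suc l) (c ! l)) [0..<L]"
    unfolding upt_Suc_shift by simp
  then show ?thesis unfolding seq_rho_def by simp
qed

lemma sum_seq_Suc:
  "(\<Sum>c\<in>seq_index (Suc L) n. G c) = (\<Sum>x\<in>{1..n 0}. \<Sum>c'\<in>seq_index L (\<lambda>l. n (Suc l)). G (x # c'))"
proof -
  have inj: "inj_on (\<lambda>(x, c). x # c) ({1..n 0} \<times> seq_index L (\<lambda>l. n (Suc l)))"
    by (auto simp: inj_on_def)
  have "(\<Sum>c\<in>seq_index (Suc L) n. G c) = (\<Sum>p\<in>{1..n 0} \<times> seq_index L (\<lambda>l. n (Suc l)). G (fst p # snd p))"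
    unfolding seq_index_Suc sum.reindex[OF inj] by (simp add: comp_def case_prod_unfold)
  also have "\<dots> = (\<Sum>x\<in>{1..n 0}. \<Sum>c'\<in>seq_index L (\<lambda>l. n (Suc l)). G (x # c'))"
    by (simp add: sum.cartesian_product case_prod_unfold)
  finally show ?thesis .
qed

lemma seq_rho_carrier:
  assumes "\<forall>l<L. \<forall>i\<in>{1..n l}. \<rho> l i \<in> carrier_mat (d l) (d l)" and "c \<in> seq_index L n"
  shows "seq_rho L \<rho> c \<in> carrier_mat (\<Prod>l<L. d l) (\<Prod>l<L. d l)"
proof -
  have "\<forall>l\<in>set [0..<L]. \<rho> l (c ! l) \<in> carrier_mat (d l) (d l)"
    using assms unfolding seq_index_def by auto
  from tl_carrier[OF this] show ?thesis unfolding seq_rho_def prod_list_upt .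
qed

lemma avg_seq:
  assumes "\<forall>l<L. \<forall>i\<in>{1..n l}. \<rho> l i \<in> carrier_mat (d l) (d l)"
  shows "avg_state (\<Prod>l<L. d l) (seq_index L n) (seq_eta L \<eta>) (seq_rho L \<rho>) =
    tensor_list (map (\<lambda>l. avg_state (d l) {1..n l} (\<eta> l) (\<rho> l)) [0..<L])"
  using assms
proof (induction L arbitrary: d n \<eta> \<rho>)
  case 0
  show ?case
    by (rule eq_matI) (simp_all add: avg_state_def seq_index_0 seq_eta_def seq_rho_def)
next
  case (Suc L)
  define D where "D = (\<Prod>l<L. d (Suc l))"
  define A0 where "A0 = avg_state (d 0) {1..n 0} (\<eta> 0) (\<rho> 0)"
  define Ar where "Ar = avg_state D (seq_index L (\<lambda>l. n (Suc l))) (seq_eta L (\<lambda>l. \<eta> (Suc l))) (seq_rho L (\<lambda>l. \<rho> (Suc l)))"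
  have prem': "\<forall>l<L. \<forall>i\<in>{1..n (Suc l)}. \<rho> (Suc l) i \<in> carrier_mat (d (Suc l)) (d (Suc l))"
    using Suc.prems by auto
  have IH: "Ar = tensor_list (map (\<lambda>l. avg_state (d (Suc l)) {1..n (Suc l)} (\<eta> (Suc l)) (\<rho> (Suc l))) [0..<L])"
    unfolding Ar_def D_def by (rule Suc.IH[OF prem'])
  have RHS: "tensor_list (map (\<lambda>l. avg_state (d l) {1..n l} (\<eta> l) (\<rho> l)) [0..<Suc L]) = kron_mat A0 Ar"
    unfolding IH A0_def upt_Suc_shift by (simp add: comp_def)
  have pd: "(\<Prod>l<Suc L. d l) = d 0 * D" unfolding D_def prod.lessThan_Suc_shift ..
  have A0c: "A0 \<in> carrier_mat (d 0) (d 0)" unfolding A0_def by (rule avg_carrier)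
  have Arc: "Ar \<in> carrier_mat D D" unfolding Ar_def by (rule avg_carrier)
  have r0c: "\<And>x. x \<in> {1..n 0} \<Longrightarrow> \<rho> 0 x \<in> carrier_mat (d 0) (d 0)" using Suc.prems by auto
  have rrc: "\<And>c'. c' \<in> seq_index L (\<lambda>l. n (Suc l)) \<Longrightarrow> seq_rho L (\<lambda>l. \<rho> (Suc l)) c' \<in> carrier_mat D D"
    unfolding D_def by (rule seq_rho_carrier[OF prem'])
  have kc: "kron_mat A0 Ar \<in> carrier_mat (d 0 * D) (d 0 * D)" by (rule kron_carrier[OF A0c Arc])
  show ?case unfolding RHS pd
  proof (rule eq_matI)
    show "dim_row (avg_state (d 0 * D) (seq_index (Suc L) n) (seq_eta (Suc L) \<eta>) (seq_rho (Suc L) \<rho>)) = dim_row (kron_mat A0 Ar)"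
      "dim_col (avg_state (d 0 * D) (seq_index (Suc L) n) (seq_eta (Suc L) \<eta>) (seq_rho (Suc L) \<rho>)) = dim_col (kron_mat A0 Ar)"
      using kc by auto
    fix a b assume "a < dim_row (kron_mat A0 Ar)" "b < dim_col (kron_mat A0 Ar)"
    then have ab: "a < d 0 * D" "b < d 0 * D" using kc by auto
    note dm = divmod_lt[OF ab(1)] divmod_lt[OF ab(2)]
    have "avg_state (d 0 * D) (seq_index (Suc L) n) (seq_eta (Suc L) \<eta>) (seq_rho (Suc L) \<rho>) $$ (a, b) =
        (\<Sum>c\<in>seq_index (Suc L) n. complex_of_real (seq_eta (Suc L) \<eta> c) * seq_rho (Suc L) \<rho> c $$ (a, b))"
      using ab by (simp add: avg_index)
    also have "\<dots> = (\<Sum>x\<in>{1..n 0}. \<Sum>c'\<in>seq_index L (\<lambda>l. n (Suc l)).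
        complex_of_real (seq_eta (Suc L) \<eta> (x # c')) * seq_rho (Suc L) \<rho> (x # c') $$ (a, b))"
      by (rule sum_seq_Suc)
    also have "\<dots> = (\<Sum>x\<in>{1..n 0}. \<Sum>c'\<in>seq_index L (\<lambda>l. n (Suc l)).
        (complex_of_real (\<eta> 0 x) * \<rho> 0 x $$ (a div D, b div D)) *
        (complex_of_real (seq_eta L (\<lambda>l. \<eta> (Suc l)) c') * seq_rho L (\<lambda>l. \<rho> (Suc l)) c' $$ (a mod D, b mod D)))"
    proof (intro sum.cong refl)
      fix x c' assume x: "x \<in> {1..n 0}" and c': "c' \<in> seq_index L (\<lambda>l. n (Suc l))"
      show "complex_of_real (seq_eta (Suc L) \<eta> (x # c')) * seq_rho (Suc L) \<rho> (x # c') $$ (a, b) =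
        (complex_of_real (\<eta> 0 x) * \<rho> 0 x $$ (a div D, b div D)) *
        (complex_of_real (seq_eta L (\<lambda>l. \<eta> (Suc l)) c') * seq_rho L (\<lambda>l. \<rho> (Suc l)) c' $$ (a mod D, b mod D))"
        unfolding seq_eta_Cons seq_rho_Cons kron_index[OF r0c[OF x] rrc[OF c'] ab]
        by (simp add: algebra_simps)
    qed
    also have "\<dots> = (\<Sum>x\<in>{1..n 0}. complex_of_real (\<eta> 0 x) * \<rho> 0 x $$ (a div D, b div D)) *
        (\<Sum>c'\<in>seq_index L (\<lambda>l. n (Suc l)). complex_of_real (seq_eta L (\<lambda>l. \<eta> (Suc l)) c') * seq_rho L (\<lambda>l. \<rho> (Suc l)) c' $$ (a mod D, b mod D))"
      by (simp only: sum_product)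
    also have "\<dots> = A0 $$ (a div D, b div D) * Ar $$ (a mod D, b mod D)"
      unfolding A0_def Ar_def using dm by (simp add: avg_index)
    also have "\<dots> = kron_mat A0 Ar $$ (a, b)"
      using kron_index[OF A0c Arc ab] by simp
    finally show "avg_state (d 0 * D) (seq_index (Suc L) n) (seq_eta (Suc L) \<eta>) (seq_rho (Suc L) \<rho>) $$ (a, b) =
        kron_mat A0 Ar $$ (a, b)" .
  qed
qed

lemma trace_lin:
  assumes X: "X \<in> carrier_mat n n" and Y: "Y \<in> carrier_mat n n" and M: "M \<in> carrier_mat n n"
  shows "mtrace ((\<alpha> \<cdot>\<^sub>m X - \<beta> \<cdot>\<^sub>m Y) * M) = \<alpha> * mtrace (X * M) - \<beta> * mtrace (Y * M)"
proof -
  have c: "\<alpha> \<cdot>\<^sub>m X - \<beta> \<cdot>\<^sub>m Y \<in> carrier_mat n n" by (rule minus_carrier_mat) (use Y in simp)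
  have "mtrace ((\<alpha> \<cdot>\<^sub>m X - \<beta> \<cdot>\<^sub>m Y) * M) = (\<Sum>i<n. \<Sum>j<n. (\<alpha> * X $$ (i, j) - \<beta> * Y $$ (i, j)) * M $$ (j, i))"
    unfolding trace_mult[OF c M] using X Y by (intro sum.cong refl) simp
  also have "\<dots> = \<alpha> * (\<Sum>i<n. \<Sum>j<n. X $$ (i, j) * M $$ (j, i)) - \<beta> * (\<Sum>i<n. \<Sum>j<n. Y $$ (i, j) * M $$ (j, i))"
    by (simp add: algebra_simps sum_subtractf sum_distrib_left)
  finally show ?thesis unfolding trace_mult[OF X M] trace_mult[OF Y M] .
qed

lemma add_minus_cancel_mat:
  assumes "X \<in> carrier_mat n n" "Z \<in> carrier_mat n n"
  shows "X + (Z - X) = (Z :: complex mat)"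
  using assms by (auto intro!: eq_matI)

theorem theorem5:
  fixes L :: nat and d n :: "nat \<Rightarrow> nat"
    and \<eta> :: "nat \<Rightarrow> nat \<Rightarrow> real" and \<rho> :: "nat \<Rightarrow> nat \<Rightarrow> complex mat"
    and Mlq :: "nat \<Rightarrow> complex mat" and Ml :: "nat \<Rightarrow> nat \<Rightarrow> complex mat"
    and Mq :: "complex mat" and M :: "nat list \<Rightarrow> complex mat"
  assumes "1 \<le> L"
    and "\<forall>l<L. ensemble (d l) {1..n l} (\<eta> l) (\<rho> l)"
    and "\<forall>l<L. max_conf_measurement (d l) {1..n l} (\<eta> l) (\<rho> l) (Mlq l) (Ml l)"
    and "measurement (\<Prod>l<L. d l) (seq_index L n) Mq M"
    and "\<forall>c\<in>seq_index L n. M c = tensor_list (map (\<lambda>l. Ml l (c ! l)) [0..<L])"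
  shows "max_conf_measurement (\<Prod>l<L. d l) (seq_index L n) (seq_eta L \<eta>) (seq_rho L \<rho>) Mq M"
proof -
  define Dn where "Dn = (\<Prod>l<L. d l)"
  define S where "S = seq_index L n"
  define E where "E = seq_eta L \<eta>"
  define R where "R = seq_rho L \<rho>"
  define A where "A = avg_state Dn S E R"
  define av where "av l = avg_state (d l) {1..n l} (\<eta> l) (\<rho> l)" for l
  have ens: "\<And>l i. l < L \<Longrightarrow> i \<in> {1..n l} \<Longrightarrow> 0 < \<eta> l i \<and> psd (d l) (\<rho> l i)"
    using assms(2) unfolding ensemble_def density_op_def by blast
  have rc: "\<forall>l<L. \<forall>i\<in>{1..n l}. \<rho> l i \<in> carrier_mat (d l) (d l)"
    using ens unfolding psd_iff by blast
  have mcm: "\<And>l. l < L \<Longrightarrow> measurement (d l) {1..n l} (Mlq l) (Ml l)"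
    using assms(3) unfolding max_conf_measurement_def by blast
  have mct: "\<And>l i. l < L \<Longrightarrow> i \<in> {1..n l} \<Longrightarrow>
      mtrace ((complex_of_real (max_conf_value (d l) {1..n l} (\<eta> l) (\<rho> l) i) \<cdot>\<^sub>m av l
        - complex_of_real (\<eta> l i) \<cdot>\<^sub>m \<rho> l i) * Ml l i) = 0"
    using assms(3) unfolding max_conf_measurement_def av_def by blast
  have Mlp: "\<And>l i. l < L \<Longrightarrow> i \<in> {1..n l} \<Longrightarrow> psd (d l) (Ml l i)"
    using mcm unfolding measurement_def by blast
  have avc: "\<And>l. av l \<in> carrier_mat (d l) (d l)" unfolding av_def by (rule avg_carrier)
  have Aeq: "A = tensor_list (map av [0..<L])"
    unfolding A_def Dn_def S_def E_def R_def av_def by (rule avg_seq[OF rc])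
  have finS: "finite S" unfolding S_def by (rule finite_seq_index)
  have Rpsd: "\<And>c. c \<in> S \<Longrightarrow> psd Dn (R c)"
  proof -
    fix c assume c: "c \<in> S"
    have "\<forall>l\<in>set [0..<L]. psd (d l) (\<rho> l (c ! l))"
      using c ens unfolding S_def seq_index_def by auto
    from tl_psd[OF this] show "psd Dn (R c)" unfolding R_def seq_rho_def Dn_def prod_list_upt .
  qed
  have Epos: "\<And>c. c \<in> S \<Longrightarrow> 0 \<le> E c"
  proof -
    fix c assume c: "c \<in> S"
    have "\<forall>l<L. 0 < \<eta> l (c ! l)" using c ens unfolding S_def seq_index_def by auto
    then show "0 \<le> E c" unfolding E_def seq_eta_def by (intro prod_nonneg) (auto simp: less_imp_le)
  qed
  show ?thesis
    unfolding max_conf_measurement_def Dn_def[symmetric] S_def[symmetric] E_def[symmetric] R_def[symmetric]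
      A_def[symmetric]
  proof (intro conjI ballI)
    show "measurement Dn S Mq M" using assms(4) unfolding Dn_def S_def .
    fix c assume c: "c \<in> S"
    have cl: "\<And>l. l < L \<Longrightarrow> c ! l \<in> {1..n l}" using c unfolding S_def seq_index_def by blast
    define C where "C l = max_conf_value (d l) {1..n l} (\<eta> l) (\<rho> l) (c ! l)" for l
    define al where "al l = mtrace (av l * Ml l (c ! l))" for l
    define rl where "rl l = mtrace (\<rho> l (c ! l) * Ml l (c ! l))" for l
    define K where "K = (\<Prod>l<L. C l)"
    define Cc where "Cc = max_conf_value Dn S E R c"
    have Mlc: "\<And>l. l < L \<Longrightarrow> Ml l (c ! l) \<in> carrier_mat (d l) (d l)" using Mlp cl unfolding psd_iff by blast
    have rlc: "\<And>l. l < L \<Longrightarrow> \<rho> l (c ! l) \<in> carrier_mat (d l) (d l)" using rc cl by blast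
    have Mc: "M c = tensor_list (map (\<lambda>l. Ml l (c ! l)) [0..<L])" using assms(5) c unfolding S_def by blast
    have Rc: "R c = tensor_list (map (\<lambda>l. \<rho> l (c ! l)) [0..<L])" unfolding R_def seq_rho_def ..
    have Mcc: "M c \<in> carrier_mat Dn Dn"
      unfolding Mc Dn_def prod_list_upt[symmetric] by (rule tl_carrier) (use Mlc in auto)
    have Rcc: "R c \<in> carrier_mat Dn Dn" using Rpsd[OF c] unfolding psd_iff by blast
    have Ac: "A \<in> carrier_mat Dn Dn" unfolding A_def by (rule avg_carrier)
    have trA: "mtrace (A * M c) = (\<Prod>l<L. al l)"
    proof -
      have "A * M c = tensor_list (map (\<lambda>l. av l * Ml l (c ! l)) [0..<L])"
        unfolding Aeq Mc by (rule tl_mult) (use avc Mlc in auto)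
      moreover have "mtrace (tensor_list (map (\<lambda>l. av l * Ml l (c ! l)) [0..<L])) =
          prod_list (map (\<lambda>l. mtrace (av l * Ml l (c ! l))) [0..<L])"
      proof (rule tl_trace[where d=d], intro ballI)
        fix l assume "l \<in> set [0..<L]"
        then have l: "l < L" by simp
        show "av l * Ml l (c ! l) \<in> carrier_mat (d l) (d l)"
          by (rule mult_carrier_mat[OF avc Mlc[OF l]])
      qed
      ultimately show ?thesis unfolding al_def prod_list_upt by simp
    qed
    have trR: "mtrace (R c * M c) = (\<Prod>l<L. rl l)"
    proof -
      have "R c * M c = tensor_list (map (\<lambda>l. \<rho> l (c ! l) * Ml l (c ! l)) [0..<L])"
        unfolding Rc Mc by (rule tl_mult) (use rlc Mlc in auto)
      moreover have "mtrace (tensor_list (map (\<lambda>l. \<rho> l (c ! l) * Ml l (c ! l)) [0..<L])) =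
          prod_list (map (\<lambda>l. mtrace (\<rho> l (c ! l) * Ml l (c ! l))) [0..<L])"
      proof (rule tl_trace[where d=d], intro ballI)
        fix l assume "l \<in> set [0..<L]"
        then have l: "l < L" by simp
        show "\<rho> l (c ! l) * Ml l (c ! l) \<in> carrier_mat (d l) (d l)"
          by (rule mult_carrier_mat[OF rlc[OF l] Mlc[OF l]])
      qed
      ultimately show ?thesis unfolding rl_def prod_list_upt by simp
    qed
    have key: "\<And>l. l < L \<Longrightarrow> complex_of_real (C l) * al l = complex_of_real (\<eta> l (c ! l)) * rl l"
    proof -
      fix l assume l: "l < L"
      have "mtrace ((complex_of_real (C l) \<cdot>\<^sub>m av l - complex_of_real (\<eta> l (c ! l)) \<cdot>\<^sub>m \<rho> l (c ! l)) * Ml l (c ! l)) = 0"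
        using mct[OF l cl[OF l]] unfolding C_def .
      then show "complex_of_real (C l) * al l = complex_of_real (\<eta> l (c ! l)) * rl l"
        unfolding trace_lin[OF avc rlc[OF l] Mlc[OF l]] al_def rl_def by simp
    qed
    have alr: "\<And>l. l < L \<Longrightarrow> al l = complex_of_real (Re (al l)) \<and> 0 \<le> Re (al l)"
    proof -
      fix l assume l: "l < L"
      have "al l = (\<Sum>i\<in>{1..n l}. complex_of_real (\<eta> l i) * mtrace (\<rho> l i * Ml l (c ! l)))"
        unfolding al_def av_def by (rule trace_avg[OF Mlc[OF l]]) (use rc l in blast)
      moreover have "\<And>i. i \<in> {1..n l} \<Longrightarrow> Im (mtrace (\<rho> l i * Ml l (c ! l))) = 0 \<and> 0 \<le> Re (mtrace (\<rho> l i * Ml l (c ! l)))"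
        using trace_psd ens[OF l] Mlp[OF l cl[OF l]] by blast
      moreover have "\<And>i. i \<in> {1..n l} \<Longrightarrow> 0 \<le> \<eta> l i" using ens[OF l] by (simp add: less_imp_le)
      ultimately show "al l = complex_of_real (Re (al l)) \<and> 0 \<le> Re (al l)"
        by (auto simp: complex_eq_iff intro!: sum_nonneg)
    qed
    have Ec: "E c = (\<Prod>l<L. \<eta> l (c ! l))" unfolding E_def seq_eta_def ..
    have ErK: "complex_of_real (E c) * (\<Prod>l<L. rl l) = complex_of_real K * (\<Prod>l<L. al l)"
    proof -
      have "complex_of_real (E c) * (\<Prod>l<L. rl l) = (\<Prod>l<L. complex_of_real (\<eta> l (c ! l)) * rl l)"
        unfolding Ec by (simp add: prod.distrib)
      also have "\<dots> = (\<Prod>l<L. complex_of_real (C l) * al l)"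
        by (intro prod.cong refl) (simp add: key)
      also have "\<dots> = complex_of_real K * (\<Prod>l<L. al l)"
        unfolding K_def by (simp add: prod.distrib)
      finally show ?thesis .
    qed
    have goal: "mtrace ((complex_of_real Cc \<cdot>\<^sub>m A - complex_of_real (E c) \<cdot>\<^sub>m R c) * M c) =
        complex_of_real Cc * (\<Prod>l<L. al l) - complex_of_real K * (\<Prod>l<L. al l)"
      unfolding trace_lin[OF Ac Rcc Mcc] trA trR ErK ..
    show "mtrace ((complex_of_real (max_conf_value Dn S E R c) \<cdot>\<^sub>m A - complex_of_real (E c) \<cdot>\<^sub>m R c) * M c) = 0"
      unfolding Cc_def[symmetric] goal
    proof (cases "\<exists>l<L. al l = 0")
      case True
      then have "(\<Prod>l<L. al l) = 0" by (simp add: prod_zero_iff) blast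
      then show "complex_of_real Cc * (\<Prod>l<L. al l) - complex_of_real K * (\<Prod>l<L. al l) = 0" by simp
    next
      case False
      define P where "P = (\<Prod>l<L. Re (al l))"
      have alp: "\<And>l. l < L \<Longrightarrow> 0 < Re (al l)"
      proof -
        fix l assume l: "l < L"
        have "al l \<noteq> 0" using False l by blast
        then show "0 < Re (al l)" using alr[OF l] by (metis less_eq_real_def of_real_0)
      qed
      have Pp: "0 < P" unfolding P_def by (rule prod_pos) (use alp in auto)
      have prodal: "(\<Prod>l<L. al l) = complex_of_real P"
      proof -
        have "(\<Prod>l<L. al l) = (\<Prod>l<L. complex_of_real (Re (al l)))"
          by (intro prod.cong refl) (use alr in auto)
        then show ?thesis unfolding P_def by simp
      qed
      define SetC where "SetC = {E c * Re (mtrace (R c * N c)) / Re (mtrace (A * N c)) | Nq N.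
          measurement Dn S Nq N \<and> 0 < Re (mtrace (A * N c))}"
      have CcSup: "Cc = Sup SetC" unfolding Cc_def max_conf_value_def SetC_def A_def ..
      have bdd: "bdd_above SetC" unfolding SetC_def A_def
        by (rule conf_bdd[OF finS _ c]) (use Epos Rpsd in auto)
      have denA: "Re (mtrace (A * M c)) = P" unfolding trA prodal by simp
      have numR: "E c * Re (mtrace (R c * M c)) = K * P"
      proof -
        have "complex_of_real (E c) * mtrace (R c * M c) = complex_of_real (K * P)"
          unfolding trR ErK prodal by simp
        then have "Re (complex_of_real (E c) * mtrace (R c * M c)) = K * P" by simp
        then show ?thesis by simp
      qed
      have memK: "K \<in> SetC"
      proof -
        have "E c * Re (mtrace (R c * M c)) / Re (mtrace (A * M c)) = K"
          unfolding numR denA using Pp by simp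
        moreover have "measurement Dn S Mq M" using assms(4) unfolding Dn_def S_def .
        moreover have "0 < Re (mtrace (A * M c))" unfolding denA by (rule Pp)
        ultimately show ?thesis unfolding SetC_def by blast
      qed
      have le1: "K \<le> Cc" unfolding CcSup by (rule cSup_upper[OF memK bdd])
      have Ppsd: "psd Dn (complex_of_real K \<cdot>\<^sub>m A - complex_of_real (E c) \<cdot>\<^sub>m R c)"
      proof -
        define X where "X l = complex_of_real (\<eta> l (c ! l)) \<cdot>\<^sub>m \<rho> l (c ! l)" for l
        define Y where "Y l = complex_of_real (C l) \<cdot>\<^sub>m av l - X l" for l
        have XY: "\<forall>l\<in>set [0..<L]. psd (d l) (X l) \<and> psd (d l) (Y l)"
        proof
          fix l assume "l \<in> set [0..<L]"
          then have l: "l < L" by simp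
          have "psd (d l) (X l)" unfolding X_def
            by (rule psd_smult) (use ens[OF l cl[OF l]] in auto)
          moreover have "psd (d l) (Y l)" unfolding Y_def X_def C_def av_def
            by (rule conf_upper[OF _ _ cl[OF l]]) (use ens[OF l] in auto)
          ultimately show "psd (d l) (X l) \<and> psd (d l) (Y l)" by blast
        qed
        have d1: "psd Dn (tensor_list (map (\<lambda>l. X l + Y l) [0..<L]) - tensor_list (map X [0..<L]))"
          using tl_diff_psd[OF XY] unfolding Dn_def prod_list_upt .
        have e1: "tensor_list (map (\<lambda>l. X l + Y l) [0..<L]) = complex_of_real K \<cdot>\<^sub>m A"
        proof -
          have "map (\<lambda>l. X l + Y l) [0..<L] = map (\<lambda>l. complex_of_real (C l) \<cdot>\<^sub>m av l) [0..<L]"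
          proof (rule map_cong[OF refl])
            fix l assume "l \<in> set [0..<L]"
            then have l: "l < L" by simp
            have "X l \<in> carrier_mat (d l) (d l)" unfolding X_def using rlc[OF l] by simp
            moreover have "complex_of_real (C l) \<cdot>\<^sub>m av l \<in> carrier_mat (d l) (d l)" using avc by simp
            ultimately show "X l + Y l = complex_of_real (C l) \<cdot>\<^sub>m av l"
              unfolding Y_def by (rule add_minus_cancel_mat)
          qed
          also have "tensor_list (map (\<lambda>l. complex_of_real (C l) \<cdot>\<^sub>m av l) [0..<L]) =
              prod_list (map (\<lambda>l. complex_of_real (C l)) [0..<L]) \<cdot>\<^sub>m tensor_list (map av [0..<L])"
            by (rule tl_smult[where d=d]) (use avc in auto)
          finally show ?thesis unfolding Aeq K_def prod_list_upt by simp
        qed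
        have e2: "tensor_list (map X [0..<L]) = complex_of_real (E c) \<cdot>\<^sub>m R c"
        proof -
          have "tensor_list (map X [0..<L]) =
              prod_list (map (\<lambda>l. complex_of_real (\<eta> l (c ! l))) [0..<L]) \<cdot>\<^sub>m tensor_list (map (\<lambda>l. \<rho> l (c ! l)) [0..<L])"
            unfolding X_def by (rule tl_smult[where d=d]) (use rlc in auto)
          then show ?thesis unfolding Rc Ec prod_list_upt by simp
        qed
        show ?thesis using d1 unfolding e1 e2 .
      qed
      have le2: "Cc \<le> K" unfolding CcSup
      proof (rule cSup_least)
        show "SetC \<noteq> {}" using memK by blast
        fix y assume "y \<in> SetC"
        then obtain Nq N where y: "y = E c * Re (mtrace (R c * N c)) / Re (mtrace (A * N c))"
          and m: "measurement Dn S Nq N" and dp: "0 < Re (mtrace (A * N c))"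
          unfolding SetC_def by blast
        have Np: "psd Dn (N c)" using m c unfolding measurement_def by blast
        then have Nc: "N c \<in> carrier_mat Dn Dn" unfolding psd_iff by blast
        have "0 \<le> Re (mtrace ((complex_of_real K \<cdot>\<^sub>m A - complex_of_real (E c) \<cdot>\<^sub>m R c) * N c))"
          using trace_psd[OF Ppsd Np] by blast
        then have "E c * Re (mtrace (R c * N c)) \<le> K * Re (mtrace (A * N c))"
          unfolding trace_lin[OF Ac Rcc Nc] by simp
        then show "y \<le> K" unfolding y using dp by (simp add: pos_divide_le_eq mult.commute)
      qed
      have "Cc = K" using le1 le2 by simp
      then show "complex_of_real Cc * (\<Prod>l<L. al l) - complex_of_real K * (\<Prod>l<L. al l) = 0" by simp
    qed
  qed
qed

end
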